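(* Let $\mathfrak g$ be a Lie algebra with a non-degenerate invariant symmetric bilinear form $B$ and derived potential $\mu\in S^3\mathfrak g$, let $\mathfrak h$ be a Lie algebra whose bracket is $\nu\in\bigwedge^2\mathfrak h^*\otimes\mathfrak h$, viewed as an element of $S^*(\mathfrak h^*\oplus\mathfrak h)$, and let $\psi\in\mathfrak h^*\otimes\bigwedge^2\mathfrak g$ with associated linear map $\theta_\psi:\mathfrak h\to\bigwedge^2\mathfrak g\simeq\mathfrak{so}(\mathfrak g)$, $\theta_\psi(x)=[x,\psi]$. Let $\mathfrak d=\mathfrak h^*\oplus\mathfrak h\oplus\mathfrak g$. (1) If $\theta_\psi$ is a homomorphism of Lie algebras $\mathfrak h\to\mathrm{Der}(\mathfrak g)$ whose image preserves $B$ and $\mathfrak d$ is the Medina–Revoy double extension of $\mathfrak g$ by $\mathfrak h$ via $\theta_\psi$, then the derived potential of the Lie algebra $\mathfrak d$ is $\mu+\nu+\psi$ and $[\mu+\nu+\psi,\mu+\nu+\psi]=0$. (2) Conversely, if $[\mu+\nu+\psi,\mu+\nu+\psi]=0$, then $\theta_\psi$ is a Lie algebra homomorphism $\mathfrak h\to\mathrm{Der}(\mathfrak g)$ with image preserving $B$, and the Lie algebra $\mathfrak h^*\oplus\mathfrak h\oplus\mathfrak g$ with derived potential $\mu+\nu+\psi$ is the Medina–Revoy double extension of $\mathfrak g$ by $\mathfrak h$ via $\theta_\psi$.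
   Context: All Lie algebras are finite-dimensional over $\mathbb K=\mathbb R$ or $\mathbb C$. A vector space $V$ with a non-degenerate symmetric form is regarded as a purely odd superspace with an (even, super-skew-symmetric) non-degenerate form; then the super-symmetric algebra $S^*V$ is the exterior algebra of $V$ (so $S^2V=\bigwedge^2V$, $S^3V=\bigwedge^3V$), and it carries the Poisson bracket $[\,,]$ determined by $[x,y]=(x,y)$ for $x,y\in V$, $[v,w_1w_2]=[v,w_1]w_2+(-1)^{\bar v\bar w_1}w_1[v,w_2]$, $[v,w]=-(-1)^{\bar v\bar w}[w,v]$. A Lie bracket on $V$ invariant with respect to the form is of the form $\{a,b\}=[a,[b,\mu]]$ for a unique $\mu\in S^3V$, called its derived potential. On $\mathfrak d=\mathfrak h^*\oplus\mathfrak h\oplus\mathfrak g$ one uses the form given by $B$ on $\mathfrak g$ plus the natural symmetric form on $\mathfrak h^*\oplus\mathfrak h$ ($\mathfrak h,\mathfrak h^*$ isotropic, pairing $\alpha(x)$), with $\mathfrak g\perp\mathfrak h^*\oplus\mathfrak h$; $\nu\in\bigwedge^2\mathfrak h^*\otimes\mathfrak h$ and $\psi\in\mathfrak h^*\otimes\bigwedge^2\mathfrak g$ are regarded as elements of $S^3(\mathfrak d)$. The identification $\bigwedge^2\mathfrak g\simeq\mathfrak{so}(\mathfrak g)$ is via the Poisson bracket action on $\mathfrak g$. Medina–Revoy double extension: given $\theta:\mathfrak h\to\mathrm{Der}(\mathfrak g)$ a Lie algebra homomorphism with $\theta(\mathfrak h)$ preserving $B$, the space $\mathfrak h^*\oplus\mathfrak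 g\oplus\mathfrak h$ with bracket $[(f_1,w_1,s_1),(f_2,w_2,s_2)]=(\mathrm{ad}^*(s_2)f_1-\mathrm{ad}^*(s_1)f_2+\omega(w_1,w_2),\,[w_1,w_2]+\theta(s_1)w_2-\theta(s_2)w_1,\,[s_1,s_2])$, where $\omega(w_1,w_2)(s)=B(\theta(s)w_1,w_2)$, is a Lie algebra, invariant with respect to the form above; it is called the double extension of $\mathfrak g$ by $\mathfrak h$ via $\theta$. *)

theory Defs
  imports Main "HOL-Library.Countable" "HOL-Library.Function_Algebras"
begin

text \<open>A finite-dimensional vector space with basis indexed by a finite type 'n is
  modelled as the coordinate space 'n \<Rightarrow> 'k (pointwise addition from Function_Algebras).\<close>

definition smul :: "'k::times \<Rightarrow> ('n \<Rightarrow> 'k) \<Rightarrow> ('n \<Rightarrow> 'k)" where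
  "smul c x = (\<lambda>i. c * x i)"

definition basis_vec :: "'n \<Rightarrow> 'n \<Rightarrow> 'k::{zero,one}" where
  "basis_vec a = (\<lambda>a'. if a' = a then 1 else 0)"

definition lin_map :: "(('n \<Rightarrow> 'k::field) \<Rightarrow> ('m \<Rightarrow> 'k)) \<Rightarrow> bool" where
  "lin_map D \<longleftrightarrow> (\<forall>x y. D (x + y) = D x + D y) \<and> (\<forall>c x. D (smul c x) = smul c (D x))"

definition lie_bracket :: "(('n \<Rightarrow> 'k::field) \<Rightarrow> ('n \<Rightarrow> 'k) \<Rightarrow> ('n \<Rightarrow> 'k)) \<Rightarrow> bool" where
  "lie_bracket L \<longleftrightarrow>
     (\<forall>y. lin_map (\<lambda>x. L x y)) \<and> (\<forall>x. lin_map (\<lambda>y. L x y)) \<and>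
     (\<forall>x. L x x = 0) \<and>
     (\<forall>x y z. L x (L y z) + L y (L z x) + L z (L x y) = 0)"

definition bform :: "('n::finite \<Rightarrow> 'n \<Rightarrow> 'k::field) \<Rightarrow> ('n \<Rightarrow> 'k) \<Rightarrow> ('n \<Rightarrow> 'k) \<Rightarrow> 'k" where
  "bform Bm x y = (\<Sum>i\<in>UNIV. \<Sum>j\<in>UNIV. x i * Bm i j * y j)"

definition symmetric_form :: "('n \<Rightarrow> 'n \<Rightarrow> 'k) \<Rightarrow> bool" where
  "symmetric_form Bm \<longleftrightarrow> (\<forall>i j. Bm i j = Bm j i)"

definition nondegenerate_form :: "('n::finite \<Rightarrow> 'n \<Rightarrow> 'k::field) \<Rightarrow> bool" where
  "nondegenerate_form Bm \<longleftrightarrow> (\<forall>x. (\<forall>y. bform Bm x y = 0) \<longrightarrow> x = 0)"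

definition invariant_form :: "('n::finite \<Rightarrow> 'n \<Rightarrow> 'k::field) \<Rightarrow> (('n \<Rightarrow> 'k) \<Rightarrow> ('n \<Rightarrow> 'k) \<Rightarrow> ('n \<Rightarrow> 'k)) \<Rightarrow> bool" where
  "invariant_form Bm L \<longleftrightarrow> (\<forall>x y z. bform Bm (L x y) z = bform Bm x (L y z))"

definition is_derivation :: "(('n \<Rightarrow> 'k::field) \<Rightarrow> ('n \<Rightarrow> 'k) \<Rightarrow> ('n \<Rightarrow> 'k)) \<Rightarrow> (('n \<Rightarrow> 'k) \<Rightarrow> ('n \<Rightarrow> 'k)) \<Rightarrow> bool" where
  "is_derivation L D \<longleftrightarrow> lin_map D \<and> (\<forall>x y. D (L x y) = L (D x) y + L x (D y))"

definition preserves_form :: "('n::finite \<Rightarrow> 'n \<Rightarrow> 'k::field) \<Rightarrow> (('n \<Rightarrow> 'k) \<Rightarrow> ('n \<Rightarrow> 'k)) \<Rightarrow> bool" where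
  "preserves_form Bm D \<longleftrightarrow> (\<forall>x y. bform Bm (D x) y + bform Bm x (D y) = 0)"

definition lie_hom_to_der ::
  "(('a \<Rightarrow> 'k::field) \<Rightarrow> ('a \<Rightarrow> 'k) \<Rightarrow> ('a \<Rightarrow> 'k)) \<Rightarrow> (('b \<Rightarrow> 'k) \<Rightarrow> ('b \<Rightarrow> 'k) \<Rightarrow> ('b \<Rightarrow> 'k))
    \<Rightarrow> (('a \<Rightarrow> 'k) \<Rightarrow> ('b \<Rightarrow> 'k) \<Rightarrow> ('b \<Rightarrow> 'k)) \<Rightarrow> bool" where
  "lie_hom_to_der Lh Lg theta \<longleftrightarrow>
     (\<forall>w. lin_map (\<lambda>s. theta s w)) \<and>
     (\<forall>s. is_derivation Lg (theta s)) \<and>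
     (\<forall>s t. theta (Lh s t) = (\<lambda>w. theta s (theta t w) - theta t (theta s w)))"

section \<open>The super-symmetric algebra of a purely odd space = exterior algebra\<close>

text \<open>For a finite basis index type 'i, an element of the exterior algebra is given by its
  coefficients: alpha S is the coefficient of e_S = e_{s_1} \<and> ... \<and> e_{s_k}, where
  s_1 < ... < s_k in the fixed linear order induced by the injection to_nat.\<close>

type_synonym ('i, 'k) ext = "'i set \<Rightarrow> 'k"

definition ord_lt :: "'i::countable \<Rightarrow> 'i \<Rightarrow> bool" where
  "ord_lt i j \<longleftrightarrow> to_nat i < to_nat j"

definition shuffle_sign :: "'i::countable set \<Rightarrow> 'i set \<Rightarrow> 'k::ring_1" where
  "shuffle_sign S T = (-1) ^ card {(s, t). s \<in> S \<and> t \<in> T \<and> ord_lt t s}"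

definition wedge :: "('i::{finite,countable}, 'k::ring_1) ext \<Rightarrow> ('i, 'k) ext \<Rightarrow> ('i, 'k) ext" where
  "wedge \<alpha> \<beta> = (\<lambda>U. \<Sum>S\<in>Pow U. shuffle_sign S (U - S) * \<alpha> S * \<beta> (U - S))"

definition ext_scale :: "'k::times \<Rightarrow> ('i, 'k) ext \<Rightarrow> ('i, 'k) ext" where
  "ext_scale c \<alpha> = (\<lambda>S. c * \<alpha> S)"

text \<open>Left and right odd partial derivatives: left_der i (e_i \<and> e_T) = e_T and
  right_der i (e_T \<and> e_i) = e_T.\<close>
definition left_der :: "'i::countable \<Rightarrow> ('i, 'k::ring_1) ext \<Rightarrow> ('i, 'k) ext" where
  "left_der i \<alpha> = (\<lambda>T. if i \<in> T then 0
       else (-1) ^ card {t \<in> T. ord_lt t i} * \<alpha> (insert i T))"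

definition right_der :: "'i::countable \<Rightarrow> ('i, 'k::ring_1) ext \<Rightarrow> ('i, 'k) ext" where
  "right_der i \<alpha> = (\<lambda>T. if i \<in> T then 0
       else (-1) ^ card {t \<in> T. ord_lt i t} * \<alpha> (insert i T))"

text \<open>The Poisson bracket determined by [x,y] = (x,y) (Gram matrix G) and the super Leibniz
  rule: [alpha, beta] = sum_{i,j} G i j (alpha right_der i) \<and> (left_der j beta).\<close>
definition poisson :: "('i::{finite,countable} \<Rightarrow> 'i \<Rightarrow> 'k::ring_1) \<Rightarrow> ('i, 'k) ext \<Rightarrow> ('i, 'k) ext \<Rightarrow> ('i, 'k) ext" where
  "poisson G \<alpha> \<beta> = (\<Sum>i\<in>UNIV. \<Sum>j\<in>UNIV. ext_scale (G i j) (wedge (right_der i \<alpha>) (left_der j \<beta>)))"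

definition vext :: "('i \<Rightarrow> 'k::zero) \<Rightarrow> ('i, 'k) ext" where
  "vext v = (\<lambda>S. if card S = 1 then v (the_elem S) else 0)"

definition homogeneous :: "nat \<Rightarrow> ('i, 'k::zero) ext \<Rightarrow> bool" where
  "homogeneous k \<alpha> \<longleftrightarrow> (\<forall>S. \<alpha> S \<noteq> 0 \<longrightarrow> card S = k)"

definition derived_potential :: "('i::{finite,countable} \<Rightarrow> 'i \<Rightarrow> 'k::ring_1)
    \<Rightarrow> (('i \<Rightarrow> 'k) \<Rightarrow> ('i \<Rightarrow> 'k) \<Rightarrow> ('i \<Rightarrow> 'k)) \<Rightarrow> ('i, 'k) ext \<Rightarrow> bool" where
  "derived_potential G L \<mu> \<longleftrightarrow> homogeneous 3 \<mu> \<and>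
     (\<forall>a b. vext (L a b) = poisson G (vext a) (poisson G (vext b) \<mu>))"

text \<open>Basis of d indexed by ('a + 'a) + 'b: Inl (Inl a) is the dual basis vector e^a of h*,
  Inl (Inr a) is the basis vector e_a of h, Inr b is the basis vector f_b of g.\<close>

definition gram_d :: "('b \<Rightarrow> 'b \<Rightarrow> 'k::{zero,one}) \<Rightarrow> ('a + 'a) + 'b \<Rightarrow> ('a + 'a) + 'b \<Rightarrow> 'k" where
  "gram_d Bm i j = (case (i, j) of
       (Inl (Inl a), Inl (Inr a')) \<Rightarrow> (if a = a' then 1 else 0)
     | (Inl (Inr a), Inl (Inl a')) \<Rightarrow> (if a = a' then 1 else 0)
     | (Inr b, Inr b') \<Rightarrow> Bm b b'
     | _ \<Rightarrow> 0)"

definition dcoord :: "('a \<Rightarrow> 'k) \<Rightarrow> ('a \<Rightarrow> 'k) \<Rightarrow> ('b \<Rightarrow> 'k) \<Rightarrow> ('a + 'a) + 'b \<Rightarrow> 'k" where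
  "dcoord f s w = case_sum (case_sum f s) w"

abbreviation hvec :: "('a \<Rightarrow> 'k::zero) \<Rightarrow> (('a + 'a) + 'b, 'k) ext" where
  "hvec s \<equiv> vext (dcoord 0 s 0)"

abbreviation gvec :: "('b \<Rightarrow> 'k::zero) \<Rightarrow> (('a + 'a) + 'b, 'k) ext" where
  "gvec w \<equiv> vext (dcoord 0 0 w)"

definition gpart :: "(('a + 'a) + 'b, 'k) ext \<Rightarrow> 'b \<Rightarrow> 'k" where
  "gpart \<alpha> = (\<lambda>b. \<alpha> {Inr b})"

text \<open>Elements of S^3 g, of (wedge^2 h*) (x) h, and of h* (x) wedge^2 g inside S^3 d.\<close>
definition in_S3_g :: "(('a + 'a) + 'b, 'k::zero) ext \<Rightarrow> bool" where
  "in_S3_g \<alpha> \<longleftrightarrow> (\<forall>S. \<alpha> S \<noteq> 0 \<longrightarrow> (\<exists>b1 b2 b3. distinct [b1, b2, b3] \<and> S = {Inr b1, Inr b2, Inr b3}))"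

definition in_L2hs_h :: "(('a + 'a) + 'b, 'k::zero) ext \<Rightarrow> bool" where
  "in_L2hs_h \<alpha> \<longleftrightarrow> (\<forall>S. \<alpha> S \<noteq> 0 \<longrightarrow> (\<exists>a1 a2 a3. a1 \<noteq> a2 \<and> S = {Inl (Inl a1), Inl (Inl a2), Inl (Inr a3)}))"

definition in_hs_L2g :: "(('a + 'a) + 'b, 'k::zero) ext \<Rightarrow> bool" where
  "in_hs_L2g \<alpha> \<longleftrightarrow> (\<forall>S. \<alpha> S \<noteq> 0 \<longrightarrow> (\<exists>a b1 b2. b1 \<noteq> b2 \<and> S = {Inl (Inl a), Inr b1, Inr b2}))"

text \<open>theta_psi(x) = [x, psi] in wedge^2 g, acting on g by the Poisson bracket:
  theta_psi(x) w = [[x, psi], w].\<close>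
definition theta_psi :: "('b::finite \<Rightarrow> 'b \<Rightarrow> 'k::ring_1) \<Rightarrow> ((('a::finite) + 'a) + 'b, 'k) ext
    \<Rightarrow> ('a \<Rightarrow> 'k) \<Rightarrow> ('b \<Rightarrow> 'k) \<Rightarrow> ('b \<Rightarrow> 'k)" where
  "theta_psi Bm \<psi> x w = gpart (poisson (gram_d Bm) (poisson (gram_d Bm) (hvec x) \<psi>) (gvec w))"

text \<open>Elements of h* + g + h are triples (f, w, s); h* carries coordinates w.r.t. the dual basis,
  so f(x) = sum_a f a * x a.  (ad^*(s) f)(t) = f([s,t]) and omega(w1,w2)(s) = B(theta(s) w1, w2).\<close>

definition dpair :: "('a::finite \<Rightarrow> 'k::comm_ring_1) \<Rightarrow> ('a \<Rightarrow> 'k) \<Rightarrow> 'k" where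
  "dpair f x = (\<Sum>a\<in>UNIV. f a * x a)"

definition coad :: "(('a::finite \<Rightarrow> 'k::comm_ring_1) \<Rightarrow> ('a \<Rightarrow> 'k) \<Rightarrow> ('a \<Rightarrow> 'k)) \<Rightarrow> ('a \<Rightarrow> 'k) \<Rightarrow> ('a \<Rightarrow> 'k) \<Rightarrow> ('a \<Rightarrow> 'k)" where
  "coad Lh s f = (\<lambda>a. dpair f (Lh s (basis_vec a)))"

definition mr_omega :: "('b::finite \<Rightarrow> 'b \<Rightarrow> 'k::field) \<Rightarrow> (('a \<Rightarrow> 'k) \<Rightarrow> ('b \<Rightarrow> 'k) \<Rightarrow> ('b \<Rightarrow> 'k))
    \<Rightarrow> ('b \<Rightarrow> 'k) \<Rightarrow> ('b \<Rightarrow> 'k) \<Rightarrow> ('a \<Rightarrow> 'k)" where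
  "mr_omega Bm theta w1 w2 = (\<lambda>a. bform Bm (theta (basis_vec a) w1) w2)"

definition mr_bracket ::
  "('b::finite \<Rightarrow> 'b \<Rightarrow> 'k::field) \<Rightarrow> (('b \<Rightarrow> 'k) \<Rightarrow> ('b \<Rightarrow> 'k) \<Rightarrow> ('b \<Rightarrow> 'k))
   \<Rightarrow> (('a::finite \<Rightarrow> 'k) \<Rightarrow> ('a \<Rightarrow> 'k) \<Rightarrow> ('a \<Rightarrow> 'k)) \<Rightarrow> (('a \<Rightarrow> 'k) \<Rightarrow> ('b \<Rightarrow> 'k) \<Rightarrow> ('b \<Rightarrow> 'k))
   \<Rightarrow> ('a \<Rightarrow> 'k) \<times> ('b \<Rightarrow> 'k) \<times> ('a \<Rightarrow> 'k) \<Rightarrow> ('a \<Rightarrow> 'k) \<times> ('b \<Rightarrow> 'k) \<times> ('a \<Rightarrow> 'k)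
   \<Rightarrow> ('a \<Rightarrow> 'k) \<times> ('b \<Rightarrow> 'k) \<times> ('a \<Rightarrow> 'k)" where
  "mr_bracket Bm Lg Lh theta u v = (case (u, v) of ((f1, w1, s1), (f2, w2, s2)) \<Rightarrow>
     (coad Lh s2 f1 - coad Lh s1 f2 + mr_omega Bm theta w1 w2,
      Lg w1 w2 + theta s1 w2 - theta s2 w1,
      Lh s1 s2))"

definition to_triple :: "(('a + 'a) + 'b \<Rightarrow> 'k) \<Rightarrow> ('a \<Rightarrow> 'k) \<times> ('b \<Rightarrow> 'k) \<times> ('a \<Rightarrow> 'k)" where
  "to_triple x = (\<lambda>a. x (Inl (Inl a)), \<lambda>b. x (Inr b), \<lambda>a. x (Inl (Inr a)))"

definition of_triple :: "('a \<Rightarrow> 'k) \<times> ('b \<Rightarrow> 'k) \<times> ('a \<Rightarrow> 'k) \<Rightarrow> ('a + 'a) + 'b \<Rightarrow> 'k" where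
  "of_triple t = (case t of (f, w, s) \<Rightarrow> dcoord f s w)"

definition double_extension ::
  "('b::finite \<Rightarrow> 'b \<Rightarrow> 'k::field) \<Rightarrow> (('b \<Rightarrow> 'k) \<Rightarrow> ('b \<Rightarrow> 'k) \<Rightarrow> ('b \<Rightarrow> 'k))
   \<Rightarrow> (('a::finite \<Rightarrow> 'k) \<Rightarrow> ('a \<Rightarrow> 'k) \<Rightarrow> ('a \<Rightarrow> 'k)) \<Rightarrow> (('a \<Rightarrow> 'k) \<Rightarrow> ('b \<Rightarrow> 'k) \<Rightarrow> ('b \<Rightarrow> 'k))
   \<Rightarrow> (('a + 'a) + 'b \<Rightarrow> 'k) \<Rightarrow> (('a + 'a) + 'b \<Rightarrow> 'k) \<Rightarrow> (('a + 'a) + 'b \<Rightarrow> 'k)" where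
  "double_extension Bm Lg Lh theta x y =
     of_triple (mr_bracket Bm Lg Lh theta (to_triple x) (to_triple y))"

end

theory Submission
  imports Defs "HOL-Analysis.Cartesian_Space"
begin

lemma ord_lt_irrefl[simp]: "\<not> ord_lt i i" by (simp add: ord_lt_def)

lemma ord_lt_total: "i \<noteq> j \<Longrightarrow> ord_lt i j \<or> ord_lt j i"
  unfolding ord_lt_def by (metis linorder_neqE_nat to_nat_split)

lemma ord_lt_asym: "ord_lt i j \<Longrightarrow> \<not> ord_lt j i"
  unfolding ord_lt_def by simp

lemma card_filter_insert:
  fixes T :: "'i::finite set"
  assumes "i \<notin> T"
  shows "card {t \<in> insert i T. P t} = card {t \<in> T. P t} + (if P i then 1 else 0)"
proof -
  have "{t \<in> insert i T. P t} = (if P i then insert i {t \<in> T. P t} else {t \<in> T. P t})" by auto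
  then show ?thesis using assms by simp
qed

lemma neg1_pow_add: "((-1::'k::ring_1) ^ (m + n)) = (-1)^m * (-1)^n" by (simp add: power_add)

lemma left_der_apply:
  "left_der i \<alpha> T = (if i \<in> T then 0 else (-1) ^ card {t \<in> T. ord_lt t i} * \<alpha> (insert i T))"
  by (simp add: left_der_def)

lemma right_der_apply:
  "right_der i \<alpha> T = (if i \<in> T then 0 else (-1) ^ card {t \<in> T. ord_lt i t} * \<alpha> (insert i T))"
  by (simp add: right_der_def)

lemma left_der_add: "left_der i (\<alpha> + \<beta> :: ('i::{finite,countable},'k::comm_ring_1) ext) = left_der i \<alpha> + left_der i \<beta>"
  by (rule ext) (simp add: left_der_def algebra_simps)

lemma left_der_zero[simp]: "left_der i 0 = 0"
  by (rule ext) (simp add: left_der_def)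

lemma left_der_scale: "left_der i (ext_scale c (\<alpha>::('i::{finite,countable},'k::comm_ring_1) ext)) = ext_scale c (left_der i \<alpha>)"
  by (rule ext) (simp add: left_der_def ext_scale_def algebra_simps)

lemma left_der_sum: "left_der i (\<Sum>j\<in>A. (f j::('i::{finite,countable},'k::comm_ring_1) ext)) = (\<Sum>j\<in>A. left_der i (f j))"
proof (induction A rule: infinite_finite_induct)
  case (infinite A) then show ?case by (simp only: sum.infinite[OF infinite] left_der_zero)
next
  case empty then show ?case by (simp only: sum.empty left_der_zero)
next
  case (insert x F) then show ?case by (simp only: sum.insert[OF insert.hyps] left_der_add insert.IH)
qed

lemma left_der_uminus: "left_der i (- (\<alpha>::('i::{finite,countable},'k::comm_ring_1) ext)) = - left_der i \<alpha>"
  by (rule ext) (simp add: left_der_def)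

lemma ext_scale_add: "ext_scale (c::'k::comm_ring_1) (\<alpha> + \<beta>) = ext_scale c \<alpha> + ext_scale c \<beta>"
  by (rule ext) (simp add: ext_scale_def algebra_simps)

lemma sum_apply_fun: "(\<Sum>j\<in>A. f j) x = (\<Sum>j\<in>A. f j x)"
  by (induction A rule: infinite_finite_induct) simp_all

lemma ext_scale_apply[simp]: "ext_scale c \<alpha> S = c * \<alpha> S" by (simp add: ext_scale_def)

lemma left_der_twice[simp]: "left_der i (left_der i \<alpha>) = 0"
  by (rule ext) (simp add: left_der_def)

definition lsg :: "'i::countable \<Rightarrow> 'i set \<Rightarrow> 'k::ring_1" where
  "lsg i T = (-1) ^ card {t \<in> T. ord_lt t i}"

definition rsg :: "'i::countable \<Rightarrow> 'i set \<Rightarrow> 'k::ring_1" where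
  "rsg i T = (-1) ^ card {t \<in> T. ord_lt i t}"

lemma lsg_insert:
  fixes T :: "'i::{finite,countable} set"
  assumes "j \<notin> T"
  shows "(lsg i (insert j T) :: 'k::ring_1) = (if ord_lt j i then -1 else 1) * lsg i T"
  unfolding lsg_def card_filter_insert[OF assms] by (simp add: power_add)

lemma rsg_insert:
  fixes T :: "'i::{finite,countable} set"
  assumes "j \<notin> T"
  shows "(rsg i (insert j T) :: 'k::ring_1) = (if ord_lt i j then -1 else 1) * rsg i T"
  unfolding rsg_def card_filter_insert[OF assms] by (simp add: power_add)

lemma lsg_empty[simp]: "lsg i {} = 1" by (simp add: lsg_def)
lemma rsg_empty[simp]: "rsg i {} = 1" by (simp add: rsg_def)

lemma lsg_sq[simp]: "lsg i T * lsg i T = (1::'k::ring_1)"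
  by (simp add: lsg_def power_mult_distrib[symmetric] flip: power_add)

lemma left_der_apply':
  "left_der i \<alpha> T = (if i \<in> T then 0 else lsg i T * \<alpha> (insert i T))"
  by (simp add: left_der_def lsg_def)

lemma right_der_apply':
  "right_der i \<alpha> T = (if i \<in> T then 0 else rsg i T * \<alpha> (insert i T))"
  by (simp add: right_der_def rsg_def)

lemma left_der_anticomm:
  fixes \<alpha> :: "('i::{finite,countable}, 'k::comm_ring_1) ext"
  shows "left_der i (left_der j \<alpha>) = - left_der j (left_der i \<alpha>)"
proof (cases "i = j")
  case True then show ?thesis by simp
next
  case ij: False
  show ?thesis
  proof (rule ext)
    fix T
    show "left_der i (left_der j \<alpha>) T = (- left_der j (left_der i \<alpha>)) T"
    proof (cases "i \<in> T \<or> j \<in> T")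
      case True then show ?thesis by (auto simp: left_der_def)
    next
      case False
      then have iT: "i \<notin> T" "j \<notin> T" by auto
      have ins: "insert i (insert j T) = insert j (insert i T)" by auto
      from ord_lt_total[OF ij] ord_lt_asym
      show ?thesis using iT ij
        by (auto simp: left_der_apply' lsg_insert ins)
    qed
  qed
qed

definition par :: "('i, 'k::ring_1) ext \<Rightarrow> ('i, 'k) ext" where
  "par \<alpha> = (\<lambda>S. (-1) ^ card S * \<alpha> S)"

lemma sum_Pow_insert:
  fixes T :: "'i::finite set"
  assumes "i \<notin> T"
  shows "(\<Sum>U\<in>Pow (insert i T). f U) = (\<Sum>S\<in>Pow T. f S) + (\<Sum>S\<in>Pow T. f (insert i S))"
proof -
  have d: "Pow T \<inter> insert i ` Pow T = {}" using assms by auto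
  have inj: "inj_on (insert i) (Pow T)"
  proof (rule inj_onI)
    fix x y assume xy: "x \<in> Pow T" "y \<in> Pow T" "insert i x = insert i y"
    then have "insert i x - {i} = insert i y - {i}" by simp
    then show "x = y" using xy(1,2) assms by auto
  qed
  have "(\<Sum>U\<in>Pow (insert i T). f U) = (\<Sum>U\<in>Pow T \<union> insert i ` Pow T. f U)"
    by (simp only: Pow_insert)
  also have "\<dots> = (\<Sum>U\<in>Pow T. f U) + (\<Sum>U\<in>insert i ` Pow T. f U)"
    by (rule sum.union_disjoint) (simp_all only: d finite)
  also have "(\<Sum>U\<in>insert i ` Pow T. f U) = (\<Sum>S\<in>Pow T. f (insert i S))"
    by (simp only: sum.reindex[OF inj] o_def)
  finally show ?thesis .
qed

lemma pairs_insert_right: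
  assumes "i \<notin> R"
  shows "{(s, t). s \<in> S \<and> t \<in> insert i R \<and> ord_lt t s} =
     {(s, t). s \<in> S \<and> t \<in> R \<and> ord_lt t s} \<union> (\<lambda>s. (s, i)) ` {s \<in> S. ord_lt i s}"
  by auto

lemma pairs_insert_left:
  assumes "i \<notin> S"
  shows "{(s, t). s \<in> insert i S \<and> t \<in> R \<and> ord_lt t s} =
     {(s, t). s \<in> S \<and> t \<in> R \<and> ord_lt t s} \<union> (\<lambda>t. (i, t)) ` {t \<in> R. ord_lt t i}"
  by auto

lemma sh_insert_right:
  fixes S R :: "'i::{finite,countable} set"
  assumes "i \<notin> R"
  shows "(shuffle_sign S (insert i R) :: 'k::ring_1) = shuffle_sign S R * rsg i S"
proof -
  have d: "{(s, t). s \<in> S \<and> t \<in> R \<and> ord_lt t s} \<inter> (\<lambda>s. (s, i)) ` {s \<in> S. ord_lt i s} = {}"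
    using assms by auto
  have c: "card ((\<lambda>s. (s, i)) ` {s \<in> S. ord_lt i s}) = card {s \<in> S. ord_lt i s}"
    by (rule card_image) (auto simp: inj_on_def)
  have u: "card ({(s, t). s \<in> S \<and> t \<in> R \<and> ord_lt t s} \<union> (\<lambda>s. (s, i)) ` {s \<in> S. ord_lt i s})
     = card {(s, t). s \<in> S \<and> t \<in> R \<and> ord_lt t s} + card {s \<in> S. ord_lt i s}"
    unfolding c[symmetric] by (rule card_Un_disjoint[OF finite finite d])
  show ?thesis unfolding shuffle_sign_def rsg_def pairs_insert_right[OF assms] u
    by (rule power_add)
qed

lemma sh_insert_left:
  fixes S R :: "'i::{finite,countable} set"
  assumes "i \<notin> S"
  shows "(shuffle_sign (insert i S) R :: 'k::ring_1) = shuffle_sign S R * lsg i R"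
proof -
  have d: "{(s, t). s \<in> S \<and> t \<in> R \<and> ord_lt t s} \<inter> (\<lambda>t. (i, t)) ` {t \<in> R. ord_lt t i} = {}"
    using assms by auto
  have c: "card ((\<lambda>t. (i, t)) ` {t \<in> R. ord_lt t i}) = card {t \<in> R. ord_lt t i}"
    by (rule card_image) (auto simp: inj_on_def)
  have u: "card ({(s, t). s \<in> S \<and> t \<in> R \<and> ord_lt t s} \<union> (\<lambda>t. (i, t)) ` {t \<in> R. ord_lt t i})
     = card {(s, t). s \<in> S \<and> t \<in> R \<and> ord_lt t s} + card {t \<in> R. ord_lt t i}"
    unfolding c[symmetric] by (rule card_Un_disjoint[OF finite finite d])
  show ?thesis unfolding shuffle_sign_def lsg_def pairs_insert_left[OF assms] u
    by (rule power_add)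
qed

lemma lsg_union:
  fixes S R :: "'i::{finite,countable} set"
  assumes "S \<inter> R = {}"
  shows "(lsg i (S \<union> R) :: 'k::ring_1) = lsg i S * lsg i R"
proof -
  have e: "{t \<in> S \<union> R. ord_lt t i} = {t \<in> S. ord_lt t i} \<union> {t \<in> R. ord_lt t i}" by auto
  have d: "{t \<in> S. ord_lt t i} \<inter> {t \<in> R. ord_lt t i} = {}" using assms by auto
  show ?thesis unfolding lsg_def e card_Un_disjoint[OF finite finite d] by (rule power_add)
qed

lemma lsg_rsg:
  fixes S :: "'i::{finite,countable} set"
  assumes "i \<notin> S"
  shows "(lsg i S * rsg i S :: 'k::ring_1) = (-1) ^ card S"
proof -
  have e: "{t \<in> S. ord_lt t i} \<union> {t \<in> S. ord_lt i t} = S"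
  proof (intro equalityI subsetI)
    fix t assume t: "t \<in> S"
    then have "t \<noteq> i" using assms by auto
    then show "t \<in> {t \<in> S. ord_lt t i} \<union> {t \<in> S. ord_lt i t}" using t ord_lt_total[of t i] by simp
  qed auto
  have d: "{t \<in> S. ord_lt t i} \<inter> {t \<in> S. ord_lt i t} = {}" using ord_lt_asym by auto
  have "card S = card {t \<in> S. ord_lt t i} + card {t \<in> S. ord_lt i t}"
    using card_Un_disjoint[OF finite finite d] by (simp only: e)
  then show ?thesis unfolding lsg_def rsg_def by (simp only: power_add)
qed

lemma lsg_sq'[simp]: "lsg i T * (lsg i T * x) = (x::'k::ring_1)"
  by (simp add: mult.assoc[symmetric])

lemma leibniz:
  fixes \<alpha> \<beta> :: "('i::{finite,countable}, 'k::comm_ring_1) ext"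
  shows "left_der i (wedge \<alpha> \<beta>) = wedge (left_der i \<alpha>) \<beta> + wedge (par \<alpha>) (left_der i \<beta>)"
proof (rule ext)
  fix T :: "'i set"
  show "left_der i (wedge \<alpha> \<beta>) T = (wedge (left_der i \<alpha>) \<beta> + wedge (par \<alpha>) (left_der i \<beta>)) T"
  proof (cases "i \<in> T")
    case False
    have A: "lsg i T * (shuffle_sign S (insert i T - S) * \<alpha> S * \<beta> (insert i T - S))
        = shuffle_sign S (T - S) * par \<alpha> S * left_der i \<beta> (T - S)" if "S \<in> Pow T" for S
    proof -
      have e: "insert i T - S = insert i (T - S)" using that False by auto
      have iS: "i \<notin> S" "i \<notin> T - S" using that False by auto
      have u: "T = S \<union> (T - S)" using that by auto
      have l: "lsg i T = (lsg i S * lsg i (T - S) :: 'k)"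
        by (subst u, rule lsg_union) auto
      have k: "lsg i T * rsg i S = (-1) ^ card S * (lsg i (T - S) :: 'k)"
        unfolding l using lsg_rsg[OF iS(1), where 'k='k] by (metis mult.assoc mult.commute)
      have "lsg i T * (shuffle_sign S (insert i T - S) * \<alpha> S * \<beta> (insert i T - S))
          = (lsg i T * rsg i S) * (shuffle_sign S (T - S) * \<alpha> S * \<beta> (insert i (T - S)))"
        unfolding e sh_insert_right[OF iS(2)] by (simp only: mult_ac)
      also have "\<dots> = shuffle_sign S (T - S) * par \<alpha> S * left_der i \<beta> (T - S)"
        unfolding k par_def left_der_apply' using iS(2) by (simp only: if_False mult_ac)
      finally show ?thesis .
    qed
    have B: "lsg i T * (shuffle_sign (insert i S) (insert i T - insert i S) * \<alpha> (insert i S) * \<beta> (insert i T - insert i S))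
        = shuffle_sign S (T - S) * left_der i \<alpha> S * \<beta> (T - S)" if "S \<in> Pow T" for S
    proof -
      have e: "insert i T - insert i S = T - S" using that False by auto
      have iS: "i \<notin> S" "i \<notin> T - S" using that False by auto
      have u: "T = S \<union> (T - S)" using that by auto
      have l: "lsg i T = (lsg i S * lsg i (T - S) :: 'k)"
        by (subst u, rule lsg_union) auto
      have "lsg i T * (shuffle_sign (insert i S) (insert i T - insert i S) * \<alpha> (insert i S) * \<beta> (insert i T - insert i S))
        = (lsg i (T - S) * lsg i (T - S)) * (lsg i S * shuffle_sign S (T - S) * \<alpha> (insert i S) * \<beta> (T - S))"
        unfolding e sh_insert_left[OF iS(1)] l by (simp only: mult_ac)
      also have "\<dots> = shuffle_sign S (T - S) * left_der i \<alpha> S * \<beta> (T - S)"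
        unfolding left_der_apply' lsg_sq using iS(1) by (simp only: if_False mult_ac mult_1_left)
      finally show ?thesis .
    qed
    have "left_der i (wedge \<alpha> \<beta>) T = lsg i T * wedge \<alpha> \<beta> (insert i T)"
      using False by (simp add: left_der_apply')
    also have "\<dots> = (\<Sum>S\<in>Pow T. lsg i T * (shuffle_sign S (insert i T - S) * \<alpha> S * \<beta> (insert i T - S)))
        + (\<Sum>S\<in>Pow T. lsg i T * (shuffle_sign (insert i S) (insert i T - insert i S) * \<alpha> (insert i S) * \<beta> (insert i T - insert i S)))"
      unfolding wedge_def sum_Pow_insert[OF False] by (simp add: sum_distrib_left distrib_left)
    also have "\<dots> = wedge (par \<alpha>) (left_der i \<beta>) T + wedge (left_der i \<alpha>) \<beta> T"
      unfolding wedge_def by (intro arg_cong2[where f="(+)"] sum.cong refl A B)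
    finally show ?thesis by simp
  next
    case True
    define T' where "T' = T - {i}"
    have iT': "i \<notin> T'" and T: "T = insert i T'" using True by (auto simp: T'_def)
    have C1: "shuffle_sign S (insert i T' - S) * left_der i \<alpha> S * \<beta> (insert i T' - S)
        = (-1) ^ card S * shuffle_sign S (T' - S) * \<alpha> (insert i S) * \<beta> (insert i (T' - S))" if "S \<in> Pow T'" for S
    proof -
      have e: "insert i T' - S = insert i (T' - S)" using that iT' by auto
      have iS: "i \<notin> S" "i \<notin> T' - S" using that iT' by auto
      have k: "rsg i S * lsg i S = ((-1) ^ card S :: 'k)"
        using lsg_rsg[OF iS(1), where 'k='k] by (simp only: mult.commute)
      have "shuffle_sign S (insert i T' - S) * left_der i \<alpha> S * \<beta> (insert i T' - S)
         = (rsg i S * lsg i S) * shuffle_sign S (T' - S) * \<alpha> (insert i S) * \<beta> (insert i (T' - S))"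
        unfolding e sh_insert_right[OF iS(2)] left_der_apply' using iS(1) by (simp only: if_False mult_ac)
      then show ?thesis unfolding k .
    qed
    have C2: "shuffle_sign S (insert i T' - S) * left_der i \<alpha> S * \<beta> (insert i T' - S) = 0"
      if "S \<in> insert i ` Pow T'" for S using that by (auto simp: left_der_apply')
    have D1: "shuffle_sign S (insert i T' - S) * par \<alpha> S * left_der i \<beta> (insert i T' - S) = 0"
      if "S \<in> Pow T'" for S using that iT' by (auto simp: left_der_apply')
    have D2: "shuffle_sign (insert i S) (insert i T' - insert i S) * par \<alpha> (insert i S) * left_der i \<beta> (insert i T' - insert i S)
        = - ((-1) ^ card S * shuffle_sign S (T' - S) * \<alpha> (insert i S) * \<beta> (insert i (T' - S)))" if "S \<in> Pow T'" for S
    proof -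
      have e: "insert i T' - insert i S = T' - S" using that iT' by auto
      have iS: "i \<notin> S" "i \<notin> T' - S" using that iT' by auto
      have c: "card (insert i S) = Suc (card S)" using iS(1) by simp
      have "shuffle_sign (insert i S) (insert i T' - insert i S) * par \<alpha> (insert i S) * left_der i \<beta> (insert i T' - insert i S)
         = (lsg i (T' - S) * lsg i (T' - S)) * (- ((-1) ^ card S * shuffle_sign S (T' - S) * \<alpha> (insert i S) * \<beta> (insert i (T' - S))))"
        unfolding e sh_insert_left[OF iS(1)] left_der_apply' par_def c using iS iT' by (simp add: mult_ac)
      then show ?thesis by (simp only: lsg_sq mult_1_left)
    qed
    have "wedge (left_der i \<alpha>) \<beta> T = (\<Sum>S\<in>Pow T'. (-1) ^ card S * shuffle_sign S (T' - S) * \<alpha> (insert i S) * \<beta> (insert i (T' - S)))"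
    proof -
      have "wedge (left_der i \<alpha>) \<beta> T = (\<Sum>S\<in>Pow T'. shuffle_sign S (insert i T' - S) * left_der i \<alpha> S * \<beta> (insert i T' - S))
         + (\<Sum>S\<in>Pow T'. shuffle_sign (insert i S) (insert i T' - insert i S) * left_der i \<alpha> (insert i S) * \<beta> (insert i T' - insert i S))"
        unfolding wedge_def T by (rule sum_Pow_insert[OF iT'])
      also have "\<dots> = (\<Sum>S\<in>Pow T'. (-1) ^ card S * shuffle_sign S (T' - S) * \<alpha> (insert i S) * \<beta> (insert i (T' - S))) + 0"
        by (intro arg_cong2[where f="(+)"] sum.cong refl C1 sum.neutral ballI C2) auto
      finally show ?thesis by simp
    qed
    moreover have "wedge (par \<alpha>) (left_der i \<beta>) T = - (\<Sum>S\<in>Pow T'. (-1) ^ card S * shuffle_sign S (T' - S) * \<alpha> (insert i S) * \<beta> (insert i (T' - S)))"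
    proof -
      have "wedge (par \<alpha>) (left_der i \<beta>) T = (\<Sum>S\<in>Pow T'. shuffle_sign S (insert i T' - S) * par \<alpha> S * left_der i \<beta> (insert i T' - S))
         + (\<Sum>S\<in>Pow T'. shuffle_sign (insert i S) (insert i T' - insert i S) * par \<alpha> (insert i S) * left_der i \<beta> (insert i T' - insert i S))"
        unfolding wedge_def T by (rule sum_Pow_insert[OF iT'])
      also have "\<dots> = 0 + (\<Sum>S\<in>Pow T'. - ((-1) ^ card S * shuffle_sign S (T' - S) * \<alpha> (insert i S) * \<beta> (insert i (T' - S))))"
        by (intro arg_cong2[where f="(+)"] sum.cong refl D2 sum.neutral ballI D1) auto
      finally show ?thesis by (simp add: sum_negf)
    qed
    ultimately show ?thesis using True by (simp add: left_der_apply')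
  qed
qed

lemma wedge_add_left: "wedge (\<alpha> + \<alpha>') \<beta> = wedge \<alpha> \<beta> + wedge \<alpha>' (\<beta>::('i::{finite,countable}, 'k::comm_ring_1) ext)"
  by (rule ext) (simp add: wedge_def sum.distrib[symmetric] algebra_simps)

lemma wedge_add_right: "wedge \<alpha> (\<beta> + \<beta>') = wedge \<alpha> \<beta> + wedge \<alpha> (\<beta>'::('i::{finite,countable}, 'k::comm_ring_1) ext)"
  by (rule ext) (simp add: wedge_def sum.distrib[symmetric] algebra_simps)

lemma wedge_scale_left: "wedge (ext_scale c \<alpha>) \<beta> = ext_scale c (wedge \<alpha> (\<beta>::('i::{finite,countable}, 'k::comm_ring_1) ext))"
  by (rule ext) (simp add: wedge_def sum_distrib_left algebra_simps)

lemma wedge_scale_right: "wedge \<alpha> (ext_scale c \<beta>) = ext_scale c (wedge \<alpha> (\<beta>::('i::{finite,countable}, 'k::comm_ring_1) ext))"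
  by (rule ext) (simp add: wedge_def sum_distrib_left algebra_simps)

lemma wedge_zero_left[simp]: "wedge 0 (\<beta>::('i::{finite,countable}, 'k::comm_ring_1) ext) = 0"
  by (rule ext) (simp add: wedge_def)

lemma wedge_zero_right[simp]: "wedge \<alpha> (0::('i::{finite,countable}, 'k::comm_ring_1) ext) = 0"
  by (rule ext) (simp add: wedge_def)

lemma wedge_empty: "wedge \<alpha> \<beta> {} = \<alpha> {} * (\<beta> {} :: 'k::comm_ring_1)"
  by (simp add: wedge_def shuffle_sign_def)

lemma ext_scale_ext_scale[simp]: "ext_scale a (ext_scale b \<alpha>) = ext_scale (a * b) (\<alpha>::('i, 'k::comm_ring_1) ext)"
  by (rule ext) (simp add: mult.assoc)

lemma ext_scale_one[simp]: "ext_scale 1 \<alpha> = (\<alpha>::('i, 'k::comm_ring_1) ext)"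
  by (rule ext) simp

lemma ext_scale_zero[simp]: "ext_scale c 0 = (0::('i, 'k::comm_ring_1) ext)"
  by (rule ext) simp

lemma homog_ld:
  fixes \<alpha> :: "('i::{finite,countable}, 'k::comm_ring_1) ext"
  assumes "homogeneous k \<alpha>"
  shows "homogeneous (k - 1) (left_der i \<alpha>)"
  unfolding homogeneous_def
proof (intro allI impI)
  fix T assume "left_der i \<alpha> T \<noteq> 0"
  then have "i \<notin> T" "\<alpha> (insert i T) \<noteq> 0" by (auto simp: left_der_apply' split: if_splits)
  then have c: "card (insert i T) = Suc (card T)" by (intro card_insert_disjoint finite)
  have "card (insert i T) = k" using assms \<open>\<alpha> (insert i T) \<noteq> 0\<close> unfolding homogeneous_def by blast
  then show "card T = k - 1" using c by simp
qed

lemma homog0_ld: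
  fixes \<alpha> :: "('i::{finite,countable}, 'k::comm_ring_1) ext"
  assumes "homogeneous 0 \<alpha>"
  shows "left_der i \<alpha> = 0"
proof (rule ext)
  fix T
  show "left_der i \<alpha> T = 0 T"
  proof (cases "i \<in> T")
    case False
    have "\<alpha> (insert i T) = 0"
    proof (rule ccontr)
      assume "\<alpha> (insert i T) \<noteq> 0"
      with assms have "card (insert i T) = 0" unfolding homogeneous_def by blast
      then show False by simp
    qed
    then show ?thesis by (simp add: left_der_apply')
  qed (simp add: left_der_apply')
qed

lemma homog_empty:
  assumes "homogeneous k \<alpha>" "k \<noteq> 0"
  shows "\<alpha> {} = 0"
proof (rule ccontr)
    assume a: "\<alpha> {} \<noteq> 0"
    have h: "\<forall>S. \<alpha> S \<noteq> 0 \<longrightarrow> card S = k" using assms(1) by (simp only: homogeneous_def)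
    show False using h[rule_format, OF a] assms(2) by simp
qed
lemma par_homog:
  fixes \<alpha> :: "('i::{finite,countable}, 'k::comm_ring_1) ext"
  assumes "homogeneous k \<alpha>"
  shows "par \<alpha> = ext_scale ((-1) ^ k) \<alpha>"
proof (rule ext)
  fix S
  have h: "\<forall>S. \<alpha> S \<noteq> 0 \<longrightarrow> card S = k" using assms(1) by (simp only: homogeneous_def)
  show "par \<alpha> S = ext_scale ((-1) ^ k) \<alpha> S"
  proof (cases "\<alpha> S = 0")
    case True then show ?thesis by (simp add: par_def)
  next
    case False then show ?thesis using h[rule_format, OF False] by (simp add: par_def)
  qed
qed

lemma leib_h:
  fixes \<alpha> \<beta> :: "('i::{finite,countable}, 'k::comm_ring_1) ext"
  assumes "homogeneous k \<alpha>"
  shows "left_der i (wedge \<alpha> \<beta>) = wedge (left_der i \<alpha>) \<beta> + ext_scale ((-1) ^ k) (wedge \<alpha> (left_der i \<beta>))"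
  unfolding leibniz par_homog[OF assms] wedge_scale_left ..

lemma homog_wedge:
  fixes \<alpha> \<beta> :: "('i::{finite,countable}, 'k::comm_ring_1) ext"
  assumes "homogeneous k \<alpha>" "homogeneous l \<beta>"
  shows "homogeneous (k + l) (wedge \<alpha> \<beta>)"
  unfolding homogeneous_def
proof (intro allI impI)
  fix U assume "wedge \<alpha> \<beta> U \<noteq> 0"
  then obtain S where S: "S \<in> Pow U" "shuffle_sign S (U - S) * \<alpha> S * \<beta> (U - S) \<noteq> 0"
    unfolding wedge_def by (meson sum.not_neutral_contains_not_neutral)
  then have "\<alpha> S \<noteq> 0" "\<beta> (U - S) \<noteq> 0" by auto
  then have "card S = k" "card (U - S) = l" using assms unfolding homogeneous_def by simp_all
  moreover have "card U = card S + card (U - S)"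
  proof -
    have SU: "S \<subseteq> U" using S(1) by simp
    have "card (U - S) = card U - card S" by (rule card_Diff_subset[OF finite SU])
    moreover have "card S \<le> card U" by (rule card_mono[OF finite SU])
    ultimately show ?thesis by simp
  qed
  ultimately show "card U = k + l" by simp
qed

lemma homog_add: "homogeneous k \<alpha> \<Longrightarrow> homogeneous k \<beta> \<Longrightarrow> homogeneous k (\<alpha> + (\<beta>::('i, 'k::comm_ring_1) ext))"
  unfolding homogeneous_def by (metis add.right_neutral plus_fun_apply)

lemma homog_scale: "homogeneous k \<alpha> \<Longrightarrow> homogeneous k (ext_scale c (\<alpha>::('i, 'k::comm_ring_1) ext))"
  unfolding homogeneous_def by (metis ext_scale_apply mult_zero_right)

lemma homog_zero[simp]: "homogeneous k (0::('i, 'k::comm_ring_1) ext)"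
  unfolding homogeneous_def by simp

lemma homog_sum: "(\<And>j. j \<in> A \<Longrightarrow> homogeneous k (f j)) \<Longrightarrow> homogeneous k (\<Sum>j\<in>A. (f j::('i, 'k::comm_ring_1) ext))"
proof (induction A rule: infinite_finite_induct)
  case (insert x F) then show ?case by (simp only: sum.insert[OF insert.hyps]) (intro homog_add; simp)
qed simp_all

lemma left_der_diff: "left_der i (\<alpha> - \<beta> :: ('i::{finite,countable},'k::comm_ring_1) ext) = left_der i \<alpha> - left_der i \<beta>"
  by (rule ext) (simp add: left_der_def algebra_simps)

lemma wedge_diff_left: "wedge (\<alpha> - \<alpha>') \<beta> = wedge \<alpha> \<beta> - wedge \<alpha>' (\<beta>::('i::{finite,countable}, 'k::comm_ring_1) ext)"
  by (rule ext) (simp add: wedge_def sum_subtractf[symmetric] algebra_simps)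

lemma wedge_diff_right: "wedge \<alpha> (\<beta> - \<beta>') = wedge \<alpha> \<beta> - wedge \<alpha> (\<beta>'::('i::{finite,countable}, 'k::comm_ring_1) ext)"
  by (rule ext) (simp add: wedge_def sum_subtractf[symmetric] algebra_simps)

lemma leib2:
  fixes \<alpha> \<beta> :: "('i::{finite,countable}, 'k::comm_ring_1) ext"
  assumes "homogeneous 2 \<alpha>"
  shows "left_der i (wedge \<alpha> \<beta>) = wedge (left_der i \<alpha>) \<beta> + wedge \<alpha> (left_der i \<beta>)"
  using leib_h[OF assms] by simp

lemma leib1:
  fixes \<alpha> \<beta> :: "('i::{finite,countable}, 'k::comm_ring_1) ext"
  assumes "homogeneous 1 \<alpha>"
  shows "left_der i (wedge \<alpha> \<beta>) = wedge (left_der i \<alpha>) \<beta> - wedge \<alpha> (left_der i \<beta>)"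
proof -
  have "ext_scale (-1) \<gamma> = - \<gamma>" for \<gamma> :: "('i, 'k) ext" by (rule ext) simp
  then show ?thesis using leib_h[OF assms] by simp
qed

lemma leib0:
  fixes \<alpha> \<beta> :: "('i::{finite,countable}, 'k::comm_ring_1) ext"
  assumes "homogeneous 0 \<alpha>"
  shows "left_der i (wedge \<alpha> \<beta>) = wedge \<alpha> (left_der i \<beta>)"
  using leib_h[OF assms] homog0_ld[OF assms] by simp

lemma D4_wedge:
  fixes \<alpha> \<beta> :: "('i::{finite,countable}, 'k::comm_ring_1) ext"
  assumes ha: "homogeneous 2 \<alpha>" and hb: "homogeneous 2 \<beta>"
  shows "left_der a (left_der b (left_der c (left_der d (wedge \<alpha> \<beta>)))) {} =
    left_der a (left_der b \<alpha>) {} * left_der c (left_der d \<beta>) {}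
  + left_der c (left_der d \<alpha>) {} * left_der a (left_der b \<beta>) {}
  - left_der a (left_der c \<alpha>) {} * left_der b (left_der d \<beta>) {}
  - left_der b (left_der d \<alpha>) {} * left_der a (left_der c \<beta>) {}
  + left_der a (left_der d \<alpha>) {} * left_der b (left_der c \<beta>) {}
  + left_der b (left_der c \<alpha>) {} * left_der a (left_der d \<beta>) {}"
proof -
  have h1a: "homogeneous 1 (left_der x \<alpha>)" for x using homog_ld[OF ha] by simp
  have h1b: "homogeneous 1 (left_der x \<beta>)" for x using homog_ld[OF hb] by simp
  have h0a: "homogeneous 0 (left_der x (left_der y \<alpha>))" for x y using homog_ld[OF h1a] by simp
  have h0b: "homogeneous 0 (left_der x (left_der y \<beta>))" for x y using homog_ld[OF h1b] by simp
  have z3a: "left_der x (left_der y (left_der z \<alpha>)) = 0" for x y z by (rule homog0_ld[OF h0a])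
  have z3b: "left_der x (left_der y (left_der z \<beta>)) = 0" for x y z by (rule homog0_ld[OF h0b])
  have e0a: "\<alpha> {} = 0" by (rule homog_empty[OF ha]) simp
  have e0b: "\<beta> {} = 0" by (rule homog_empty[OF hb]) simp
  have e1a: "left_der x \<alpha> {} = 0" for x by (rule homog_empty[OF h1a]) simp
  have e1b: "left_der x \<beta> {} = 0" for x by (rule homog_empty[OF h1b]) simp
  have s1: "left_der d (wedge \<alpha> \<beta>) = wedge (left_der d \<alpha>) \<beta> + wedge \<alpha> (left_der d \<beta>)"
    by (rule leib2[OF ha])
  have s2: "left_der c (left_der d (wedge \<alpha> \<beta>)) =
     wedge (left_der c (left_der d \<alpha>)) \<beta> + wedge (left_der d \<alpha>) (left_der c \<beta>)
     - wedge (left_der d \<alpha>) (left_der c \<beta>) - wedge (left_der d \<alpha>) (left_der c \<beta>)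
     + (wedge (left_der c \<alpha>) (left_der d \<beta>) + wedge \<alpha> (left_der c (left_der d \<beta>)))"
    unfolding s1 left_der_add leib1[OF h1a] leib2[OF ha] by simp
  have s3: "left_der b (left_der c (left_der d (wedge \<alpha> \<beta>))) =
     wedge (left_der c (left_der d \<alpha>)) (left_der b \<beta>)
     - (wedge (left_der b (left_der d \<alpha>)) (left_der c \<beta>) - wedge (left_der d \<alpha>) (left_der b (left_der c \<beta>)))
     + (wedge (left_der b (left_der c \<alpha>)) (left_der d \<beta>) - wedge (left_der c \<alpha>) (left_der b (left_der d \<beta>)))
     + wedge (left_der b \<alpha>) (left_der c (left_der d \<beta>))"
    unfolding s2 left_der_add left_der_diff leib0[OF h0a] leib1[OF h1a] leib2[OF ha] z3b by simp
  show ?thesis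
    unfolding s3 left_der_add left_der_diff leib0[OF h0a] leib1[OF h1a] z3a z3b
    by (simp add: wedge_empty e0a e0b e1a e1b algebra_simps)
qed

definition cst :: "'k::zero \<Rightarrow> ('i, 'k) ext" where
  "cst c = (\<lambda>T. if T = {} then c else 0)"

lemma card1_insert:
  fixes T :: "'i::finite set"
  assumes "i \<notin> T"
  shows "card (insert i T) = 1 \<longleftrightarrow> T = {}"
  using assms by (simp add: card_insert_disjoint)

lemma right_der_vext: "right_der i (vext u :: ('i::{finite,countable},'k::comm_ring_1) ext) = cst (u i)"
proof (rule ext)
  fix T :: "'i set"
  show "right_der i (vext u) T = cst (u i) T"
  proof (cases "i \<in> T")
    case True then show ?thesis by (auto simp: right_der_apply' cst_def)
  next
    case False
    then show ?thesis by (auto simp: right_der_apply' cst_def vext_def card1_insert)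
  qed
qed

lemma left_der_vext: "left_der i (vext u :: ('i::{finite,countable},'k::comm_ring_1) ext) = cst (u i)"
proof (rule ext)
  fix T :: "'i set"
  show "left_der i (vext u) T = cst (u i) T"
  proof (cases "i \<in> T")
    case True then show ?thesis by (auto simp: left_der_apply' cst_def)
  next
    case False
    then show ?thesis by (auto simp: left_der_apply' cst_def vext_def card1_insert)
  qed
qed

lemma wedge_cst_left: "wedge (cst c) \<beta> = ext_scale c (\<beta> :: ('i::{finite,countable},'k::comm_ring_1) ext)"
proof (rule ext)
  fix U :: "'i set"
  have "wedge (cst c) \<beta> U = (\<Sum>S\<in>Pow U. if S = {} then c * \<beta> U else 0)"
    unfolding wedge_def by (rule sum.cong) (auto simp: cst_def shuffle_sign_def)
  also have "\<dots> = c * \<beta> U" by (simp add: sum.delta[OF finite])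
  finally show "wedge (cst c) \<beta> U = ext_scale c \<beta> U" by simp
qed

lemma wedge_cst_right: "wedge \<beta> (cst c) = ext_scale c (\<beta> :: ('i::{finite,countable},'k::comm_ring_1) ext)"
proof (rule ext)
  fix U :: "'i set"
  have "wedge \<beta> (cst c) U = (\<Sum>S\<in>Pow U. if S = U then c * \<beta> U else 0)"
    unfolding wedge_def
  proof (rule sum.cong)
    fix S assume S: "S \<in> Pow U"
    show "shuffle_sign S (U - S) * \<beta> S * cst c (U - S) = (if S = U then c * \<beta> U else 0)"
    proof (cases "S = U")
      case True then show ?thesis by (simp add: cst_def shuffle_sign_def)
    next
      case False then have "U - S \<noteq> {}" using S by auto
      then show ?thesis using False by (simp add: cst_def)
    qed
  qed simp
  also have "\<dots> = c * \<beta> U" by (simp add: sum.delta'[OF finite])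
  finally show "wedge \<beta> (cst c) U = ext_scale c \<beta> U" by simp
qed

definition gv :: "('i::finite \<Rightarrow> 'i \<Rightarrow> 'k::comm_ring_1) \<Rightarrow> ('i \<Rightarrow> 'k) \<Rightarrow> 'i \<Rightarrow> 'k" where
  "gv G u j = (\<Sum>i\<in>UNIV. u i * G i j)"

lemma poisson_apply:
  "poisson G \<alpha> \<beta> T = (\<Sum>i\<in>UNIV. \<Sum>j\<in>UNIV. G i j * wedge (right_der i \<alpha>) (left_der j \<beta>) T)"
  unfolding poisson_def by (simp add: sum_apply_fun)

lemma poisson_vext_left:
  fixes \<beta> :: "('i::{finite,countable},'k::comm_ring_1) ext"
  shows "poisson G (vext u) \<beta> = (\<Sum>j\<in>UNIV. ext_scale (gv G u j) (left_der j \<beta>))"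
proof (rule ext)
  fix T
  have "poisson G (vext u) \<beta> T = (\<Sum>i\<in>UNIV. \<Sum>j\<in>UNIV. G i j * (u i * left_der j \<beta> T))"
    unfolding poisson_apply right_der_vext wedge_cst_left by simp
  also have "\<dots> = (\<Sum>j\<in>UNIV. \<Sum>i\<in>UNIV. u i * G i j * left_der j \<beta> T)"
    by (subst sum.swap) (simp add: algebra_simps)
  also have "\<dots> = (\<Sum>j\<in>UNIV. ext_scale (gv G u j) (left_der j \<beta>)) T"
    by (simp add: sum_apply_fun gv_def sum_distrib_right)
  finally show "poisson G (vext u) \<beta> T = (\<Sum>j\<in>UNIV. ext_scale (gv G u j) (left_der j \<beta>)) T" .
qed

lemma right_der_homog:
  fixes \<alpha> :: "('i::{finite,countable},'k::comm_ring_1) ext"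
  assumes "homogeneous k \<alpha>"
  shows "right_der i \<alpha> = ext_scale ((-1) ^ (k - 1)) (left_der i \<alpha>)"
proof (rule ext)
  fix T
  have h: "\<forall>S. \<alpha> S \<noteq> 0 \<longrightarrow> card S = k" using assms by (simp only: homogeneous_def)
  show "right_der i \<alpha> T = ext_scale ((-1) ^ (k - 1)) (left_der i \<alpha>) T"
  proof (cases "i \<in> T \<or> \<alpha> (insert i T) = 0")
    case True then show ?thesis by (auto simp: right_der_apply' left_der_apply')
  next
    case False
    then have iT: "i \<notin> T" and nz: "\<alpha> (insert i T) \<noteq> 0" by auto
    have "card (insert i T) = k" using h[rule_format, OF nz] .
    then have ck: "card T = k - 1" using iT by (simp add: card_insert_disjoint)
    have "lsg i T * rsg i T = ((-1) ^ card T :: 'k)" by (rule lsg_rsg[OF iT])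
    then have "rsg i T = ((-1) ^ card T * lsg i T :: 'k)"
      by (metis lsg_sq' mult.commute)
    then show ?thesis using iT by (simp add: right_der_apply' left_der_apply' ck mult.assoc)
  qed
qed

lemma poisson_PP:
  fixes P :: "('i::{finite,countable},'k::comm_ring_1) ext"
  assumes "homogeneous 3 P"
  shows "poisson G P P = (\<Sum>i\<in>UNIV. \<Sum>j\<in>UNIV. ext_scale (G i j) (wedge (left_der i P) (left_der j P)))"
  unfolding poisson_def right_der_homog[OF assms] by simp

lemma vext_single: "vext u {m} = u m"
  by (simp add: vext_def)

lemma left_der_empty: "left_der m \<gamma> {} = \<gamma> {m}"
  by (simp add: left_der_apply')

lemma homog1_vext:
  fixes \<gamma> :: "('i::{finite,countable},'k::comm_ring_1) ext"
  assumes "homogeneous 1 \<gamma>"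
  shows "\<gamma> = vext (\<lambda>m. \<gamma> {m})"
proof (rule ext)
  fix S
  have h: "\<forall>S. \<gamma> S \<noteq> 0 \<longrightarrow> card S = 1" using assms by (simp only: homogeneous_def)
  show "\<gamma> S = vext (\<lambda>m. \<gamma> {m}) S"
  proof (cases "card S = 1")
    case True
    then obtain x where "S = {x}" by (auto simp: card_Suc_eq)
    then show ?thesis by (simp add: vext_def)
  next
    case False
    then have "\<gamma> S = 0" using h by blast
    then show ?thesis using False by (simp add: vext_def)
  qed
qed

definition pp :: "('i::{finite,countable},'k::comm_ring_1) ext \<Rightarrow> 'i \<Rightarrow> 'i \<Rightarrow> 'i \<Rightarrow> 'k" where
  "pp P x y z = left_der x (left_der y (left_der z P)) {}"

lemma pp_swap12: "pp P x y z = - pp P y x z"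
  unfolding pp_def by (subst left_der_anticomm) simp

lemma pp_swap23: "pp P x y z = - pp P x z y"
  unfolding pp_def by (subst (2) left_der_anticomm) (simp add: left_der_uminus)

lemma pp_cyc: "pp P x y z = pp P y z x"
  using pp_swap12[of P x y z] pp_swap23[of P y x z] by simp

lemma pp_add: "pp (P + P') x y z = pp P x y z + pp P' x y z"
  unfolding pp_def by (simp add: left_der_add)

definition SS :: "('i::{finite,countable} \<Rightarrow> 'i \<Rightarrow> 'k::comm_ring_1) \<Rightarrow> ('i,'k) ext \<Rightarrow> 'i \<Rightarrow> 'i \<Rightarrow> 'i \<Rightarrow> 'i \<Rightarrow> 'k" where
  "SS G P x y z w = (\<Sum>i\<in>UNIV. \<Sum>j\<in>UNIV. G i j * (pp P x y i * pp P z w j))"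

lemma SS_sym:
  assumes "\<And>i j. G i j = G j i"
  shows "(\<Sum>i\<in>UNIV. \<Sum>j\<in>UNIV. G i j * (pp P z w i * pp P x y j)) = SS G P x y z w"
  unfolding SS_def by (subst sum.swap) (simp add: assms mult_ac)

lemma Q4:
  fixes P :: "('i::{finite,countable},'k::comm_ring_1) ext"
  assumes hP: "homogeneous 3 P" and sym: "\<And>i j. G i j = G j i"
  shows "left_der a (left_der b (left_der c (left_der d (poisson G P P)))) {} =
     2 * (SS G P a b c d - SS G P a c b d + SS G P a d b c)"
proof -
  have h2: "homogeneous 2 (left_der i P)" for i using homog_ld[OF hP] by simp
  have ld4: "left_der a (left_der b (left_der c (left_der d (wedge (left_der i P) (left_der j P))))) {} =
     pp P a b i * pp P c d j + pp P c d i * pp P a b j - pp P a c i * pp P b d j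
     - pp P b d i * pp P a c j + pp P a d i * pp P b c j + pp P b c i * pp P a d j" for i j
    unfolding D4_wedge[OF h2 h2] pp_def ..
  have "left_der a (left_der b (left_der c (left_der d (poisson G P P)))) {} =
     (\<Sum>i\<in>UNIV. \<Sum>j\<in>UNIV. G i j * (pp P a b i * pp P c d j + pp P c d i * pp P a b j - pp P a c i * pp P b d j
     - pp P b d i * pp P a c j + pp P a d i * pp P b c j + pp P b c i * pp P a d j))"
    unfolding poisson_PP[OF hP] left_der_sum left_der_scale sum_apply_fun ext_scale_apply ld4 ..
  also have "\<dots> = SS G P a b c d + (\<Sum>i\<in>UNIV. \<Sum>j\<in>UNIV. G i j * (pp P c d i * pp P a b j))
      - SS G P a c b d - (\<Sum>i\<in>UNIV. \<Sum>j\<in>UNIV. G i j * (pp P b d i * pp P a c j))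
      + SS G P a d b c + (\<Sum>i\<in>UNIV. \<Sum>j\<in>UNIV. G i j * (pp P b c i * pp P a d j))"
    unfolding SS_def by (simp add: sum.distrib sum_subtractf algebra_simps)
  also have "\<dots> = 2 * (SS G P a b c d - SS G P a c b d + SS G P a d b c)"
    unfolding SS_sym[OF sym] by (simp add: algebra_simps)
  finally show ?thesis .
qed

lemma lsg_ne: "lsg i T * lsg i T = (1::'k::ring_1)" by simp

lemma extract4:
  fixes Q :: "('i::{finite,countable},'k::comm_ring_1) ext"
  assumes hQ: "homogeneous 4 Q" and z: "\<And>a b c d. left_der a (left_der b (left_der c (left_der d Q))) {} = 0"
  shows "Q = 0"
proof (rule ext)
  fix U
  show "Q U = 0 U"
  proof (rule ccontr)
    assume nz: "Q U \<noteq> 0 U"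
    have h: "\<forall>S. Q S \<noteq> 0 \<longrightarrow> card S = 4" using hQ by (simp only: homogeneous_def)
    have "card U = Suc (Suc (Suc (Suc 0)))" using h[rule_format, of U] nz by simp
    from card_eq_SucD[OF this] obtain d U1 where U: "U = insert d U1" "d \<notin> U1" "card U1 = Suc (Suc (Suc 0))"
      by blast
    from card_eq_SucD[OF U(3)] obtain c U2 where U1: "U1 = insert c U2" "c \<notin> U2" "card U2 = Suc (Suc 0)"
      by blast
    from card_eq_SucD[OF U1(3)] obtain b U3 where U2: "U2 = insert b U3" "b \<notin> U3" "card U3 = Suc 0"
      by blast
    from card_eq_SucD[OF U2(3)] obtain a where U3: "U3 = {a}"
      by blast
    have "left_der a (left_der b (left_der c (left_der d Q))) {} =
        lsg b U3 * (lsg c U2 * (lsg d U1 * Q U))"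
      using U U1 U2 U3 by (simp add: left_der_apply')
    then have "lsg b U3 * (lsg c U2 * (lsg d U1 * Q U)) = 0" using z by simp
    then have "lsg d U1 * (lsg c U2 * (lsg b U3 * (lsg b U3 * (lsg c U2 * (lsg d U1 * Q U))))) = 0" by simp
    then show False using nz by simp
  qed
qed

definition Lp :: "('i::{finite,countable} \<Rightarrow> 'i \<Rightarrow> 'k::comm_ring_1) \<Rightarrow> ('i,'k) ext \<Rightarrow> ('i \<Rightarrow> 'k) \<Rightarrow> ('i \<Rightarrow> 'k) \<Rightarrow> 'i \<Rightarrow> 'k" where
  "Lp G P x y = (\<lambda>m. \<Sum>j\<in>UNIV. \<Sum>l\<in>UNIV. gv G x j * gv G y l * pp P m j l)"

lemma pot_Lp:
  fixes P :: "('i::{finite,countable},'k::comm_ring_1) ext"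
  assumes hP: "homogeneous 3 P"
  shows "poisson G (vext x) (poisson G (vext y) P) = vext (Lp G P x y)"
proof -
  let ?g = "poisson G (vext x) (poisson G (vext y) P)"
  have e: "?g = (\<Sum>j\<in>UNIV. ext_scale (gv G x j) (left_der j (\<Sum>l\<in>UNIV. ext_scale (gv G y l) (left_der l P))))"
    unfolding poisson_vext_left ..
  have h2: "homogeneous 2 (left_der l P)" for l using homog_ld[OF hP] by simp
  have h1: "homogeneous 1 (left_der j (left_der l P))" for j l using homog_ld[OF h2] by simp
  have "homogeneous 1 ?g" unfolding e left_der_sum left_der_scale
    by (intro homog_sum homog_scale h1)
  then have "?g = vext (\<lambda>m. ?g {m})" by (rule homog1_vext)
  also have "(\<lambda>m. ?g {m}) = Lp G P x y"
  proof (rule ext)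
    fix m
    have "?g {m} = left_der m ?g {}" by (simp add: left_der_empty)
    also have "\<dots> = (\<Sum>j\<in>UNIV. gv G x j * (\<Sum>l\<in>UNIV. gv G y l * pp P m j l))"
      unfolding e left_der_sum left_der_scale sum_apply_fun ext_scale_apply pp_def ..
    also have "\<dots> = Lp G P x y m" unfolding Lp_def by (simp add: sum_distrib_left mult.assoc)
    finally show "?g {m} = Lp G P x y m" .
  qed
  finally show ?thesis .
qed

lemma sum_swap3: "(\<Sum>l\<in>A. \<Sum>r\<in>B. \<Sum>s\<in>C. f l r s) = (\<Sum>r\<in>B. \<Sum>s\<in>C. \<Sum>l\<in>A. f l r s)"
proof -
  have "(\<Sum>l\<in>A. \<Sum>r\<in>B. \<Sum>s\<in>C. f l r s) = (\<Sum>r\<in>B. \<Sum>l\<in>A. \<Sum>s\<in>C. f l r s)" by (rule sum.swap)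
  also have "\<dots> = (\<Sum>r\<in>B. \<Sum>s\<in>C. \<Sum>l\<in>A. f l r s)" by (rule sum.cong[OF refl], rule sum.swap)
  finally show ?thesis .
qed

lemma gv_Lp:
  "gv G (Lp G P y z) l = (\<Sum>r\<in>UNIV. \<Sum>s\<in>UNIV. gv G y r * gv G z s * (\<Sum>i\<in>UNIV. G i l * pp P r s i))"
proof -
  have "gv G (Lp G P y z) l = (\<Sum>i\<in>UNIV. (\<Sum>r\<in>UNIV. \<Sum>s\<in>UNIV. gv G y r * gv G z s * pp P i r s) * G i l)"
    unfolding gv_def[of G "Lp G P y z"] by (simp only: Lp_def)
  also have "\<dots> = (\<Sum>i\<in>UNIV. \<Sum>r\<in>UNIV. \<Sum>s\<in>UNIV. gv G y r * gv G z s * (G i l * pp P r s i))"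
  proof (rule sum.cong[OF refl])
    fix i
    have c: "pp P i r s = pp P r s i" for r s by (rule pp_cyc)
    show "(\<Sum>r\<in>UNIV. \<Sum>s\<in>UNIV. gv G y r * gv G z s * pp P i r s) * G i l =
      (\<Sum>r\<in>UNIV. \<Sum>s\<in>UNIV. gv G y r * gv G z s * (G i l * pp P r s i))"
      by (simp add: sum_distrib_right sum_distrib_left c mult_ac)
  qed
  also have "\<dots> = (\<Sum>r\<in>UNIV. \<Sum>s\<in>UNIV. \<Sum>i\<in>UNIV. gv G y r * gv G z s * (G i l * pp P r s i))"
    by (rule sum_swap3)
  also have "\<dots> = (\<Sum>r\<in>UNIV. \<Sum>s\<in>UNIV. gv G y r * gv G z s * (\<Sum>i\<in>UNIV. G i l * pp P r s i))"
    by (simp add: sum_distrib_left)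
  finally show ?thesis .
qed

lemma Lp_Lp:
  "Lp G P x (Lp G P y z) m = (\<Sum>j\<in>UNIV. \<Sum>r\<in>UNIV. \<Sum>s\<in>UNIV. gv G x j * gv G y r * gv G z s * SS G P r s m j)"
proof -
  have "Lp G P x (Lp G P y z) m = (\<Sum>j\<in>UNIV. \<Sum>l\<in>UNIV. \<Sum>r\<in>UNIV. \<Sum>s\<in>UNIV.
      gv G x j * gv G y r * gv G z s * ((\<Sum>i\<in>UNIV. G i l * pp P r s i) * pp P m j l))"
    unfolding Lp_def[of G P x] gv_Lp by (simp add: sum_distrib_right sum_distrib_left mult_ac)
  also have "\<dots> = (\<Sum>j\<in>UNIV. \<Sum>r\<in>UNIV. \<Sum>s\<in>UNIV. \<Sum>l\<in>UNIV.
      gv G x j * gv G y r * gv G z s * ((\<Sum>i\<in>UNIV. G i l * pp P r s i) * pp P m j l))"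
    by (rule sum.cong[OF refl], rule sum_swap3)
  also have "\<dots> = (\<Sum>j\<in>UNIV. \<Sum>r\<in>UNIV. \<Sum>s\<in>UNIV. gv G x j * gv G y r * gv G z s * SS G P r s m j)"
  proof -
    have "(\<Sum>l\<in>UNIV. (\<Sum>i\<in>UNIV. G i l * pp P r s i) * pp P m j l) = SS G P r s m j" for r s j
    proof -
      have "(\<Sum>l\<in>UNIV. (\<Sum>i\<in>UNIV. G i l * pp P r s i) * pp P m j l)
          = (\<Sum>l\<in>UNIV. \<Sum>i\<in>UNIV. G i l * (pp P r s i * pp P m j l))"
        by (simp add: sum_distrib_right sum_distrib_left mult_ac)
      also have "\<dots> = (\<Sum>i\<in>UNIV. \<Sum>l\<in>UNIV. G i l * (pp P r s i * pp P m j l))"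
        by (rule sum.swap)
      finally show ?thesis unfolding SS_def .
    qed
    then show ?thesis by (simp add: sum_distrib_left[symmetric])
  qed
  finally show ?thesis .
qed

definition KK :: "('i::{finite,countable} \<Rightarrow> 'i \<Rightarrow> 'k::comm_ring_1) \<Rightarrow> ('i,'k) ext \<Rightarrow> 'i \<Rightarrow> 'i \<Rightarrow> 'i \<Rightarrow> 'i \<Rightarrow> 'k" where
  "KK G P m j r s = SS G P r s m j + SS G P s j m r + SS G P j r m s"

lemma jacobi_coord:
  "Lp G P x (Lp G P y z) m + Lp G P y (Lp G P z x) m + Lp G P z (Lp G P x y) m =
   (\<Sum>j\<in>UNIV. \<Sum>r\<in>UNIV. \<Sum>s\<in>UNIV. gv G x j * gv G y r * gv G z s * KK G P m j r s)"
proof -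
  have a: "Lp G P y (Lp G P z x) m = (\<Sum>j\<in>UNIV. \<Sum>r\<in>UNIV. \<Sum>s\<in>UNIV. gv G x j * gv G y r * gv G z s * SS G P s j m r)"
  proof -
    have "Lp G P y (Lp G P z x) m = (\<Sum>r\<in>UNIV. \<Sum>s\<in>UNIV. \<Sum>j\<in>UNIV. gv G y r * gv G z s * gv G x j * SS G P s j m r)"
      by (rule Lp_Lp)
    also have "\<dots> = (\<Sum>j\<in>UNIV. \<Sum>r\<in>UNIV. \<Sum>s\<in>UNIV. gv G y r * gv G z s * gv G x j * SS G P s j m r)"
      by (rule sum_swap3[symmetric])
    finally show ?thesis by (simp add: mult_ac)
  qed
  have b: "Lp G P z (Lp G P x y) m = (\<Sum>j\<in>UNIV. \<Sum>r\<in>UNIV. \<Sum>s\<in>UNIV. gv G x j * gv G y r * gv G z s * SS G P j r m s)"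
  proof -
    have "Lp G P z (Lp G P x y) m = (\<Sum>s\<in>UNIV. \<Sum>j\<in>UNIV. \<Sum>r\<in>UNIV. gv G z s * gv G x j * gv G y r * SS G P j r m s)"
      by (rule Lp_Lp)
    also have "\<dots> = (\<Sum>j\<in>UNIV. \<Sum>r\<in>UNIV. \<Sum>s\<in>UNIV. gv G z s * gv G x j * gv G y r * SS G P j r m s)"
      by (rule sum_swap3)
    finally show ?thesis by (simp add: mult_ac)
  qed
  show ?thesis unfolding a b unfolding Lp_Lp[of G P x y z] KK_def by (simp add: sum.distrib[symmetric] distrib_left)
qed

lemma SS_swap_pairs:
  assumes "\<And>i j. G i j = G j i"
  shows "SS G P x y z w = SS G P z w x y"
  unfolding SS_def by (subst sum.swap) (simp add: assms mult_ac)

lemma SS_anti: "SS G P x y z w = - SS G P y x z w"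
  unfolding SS_def by (subst pp_swap12) (simp add: sum_negf[symmetric])

lemma Q4_KK:
  fixes P :: "('i::{finite,countable},'k::comm_ring_1) ext"
  assumes hP: "homogeneous 3 P" and sym: "\<And>i j. G i j = G j i"
  shows "left_der m (left_der j (left_der r (left_der s (poisson G P P)))) {} = 2 * KK G P m j r s"
proof -
  have "SS G P m r j s = - SS G P s j m r"
    using SS_swap_pairs[OF sym, where P=P and x=m and y=r and z=j and w=s] SS_anti[of G P j s m r] by simp
  then show ?thesis unfolding Q4[OF hP sym] KK_def
    using SS_swap_pairs[OF sym, where P=P and x=m and y=j and z=r and w=s] SS_swap_pairs[OF sym, where P=P and x=m and y=s and z=j and w=r] by simp
qed

lemma homog_PP:
  fixes P :: "('i::{finite,countable},'k::comm_ring_1) ext"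
  assumes hP: "homogeneous 3 P"
  shows "homogeneous 4 (poisson G P P)"
proof -
  have h2: "homogeneous 2 (left_der l P)" for l using homog_ld[OF hP] by simp
  show ?thesis unfolding poisson_PP[OF hP]
    using homog_wedge[OF h2 h2] by (intro homog_sum homog_scale) simp
qed

lemma sd1: "(\<Sum>s\<in>UNIV. (if s = d then 1 else 0) * (f s :: 'k::comm_ring_1)) = f (d::'i::finite)"
proof -
  have "(\<Sum>s\<in>UNIV. (if s = d then 1 else 0) * f s) = (\<Sum>s\<in>UNIV. if s = d then f s else 0)"
    by (rule sum.cong) auto
  then show ?thesis by simp
qed
lemma sum_delta3: "(\<Sum>j\<in>UNIV. \<Sum>r\<in>UNIV. \<Sum>s\<in>UNIV. (if j = b then 1 else 0) * (if r = c then 1 else 0) * (if s = d then 1 else 0) * (f j r s::'k::comm_ring_1)) = f (b::'i::finite) (c::'i) (d::'i)"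
proof -
  have "(\<Sum>j\<in>UNIV. \<Sum>r\<in>UNIV. \<Sum>s\<in>UNIV. (if j = b then 1 else 0) * (if r = c then 1 else 0) * (if s = d then 1 else 0) * f j r s)
     = (\<Sum>j\<in>UNIV. (if j = b then 1 else 0) * (\<Sum>r\<in>UNIV. (if r = c then 1 else 0) * (\<Sum>s\<in>UNIV. (if s = d then 1 else 0) * f j r s)))"
    by (simp add: sum_distrib_left mult.assoc)
  then show ?thesis by (simp add: sd1)
qed

definition jac_Lp :: "('i::{finite,countable} \<Rightarrow> 'i \<Rightarrow> 'k::comm_ring_1) \<Rightarrow> ('i,'k) ext \<Rightarrow> bool" where
  "jac_Lp G P \<longleftrightarrow> (\<forall>x y z. Lp G P x (Lp G P y z) + Lp G P y (Lp G P z x) + Lp G P z (Lp G P x y) = 0)"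

lemma Q0_imp_jac:
  fixes P :: "('i::{finite,countable},'k::field_char_0) ext"
  assumes hP: "homogeneous 3 P" and sym: "\<And>i j. G i j = G j i" and Q: "poisson G P P = 0"
  shows "jac_Lp G P"
proof -
  have K: "KK G P m j r s = 0" for m j r s
    using Q4_KK[where G=G, OF hP sym, of m j r s] Q by simp
  show ?thesis unfolding jac_Lp_def
  proof (intro allI ext)
    fix x y z m
    show "(Lp G P x (Lp G P y z) + Lp G P y (Lp G P z x) + Lp G P z (Lp G P x y)) m = 0 m"
      using jacobi_coord[of G P x y z m] K by simp
  qed
qed

lemma jac_imp_Q0:
  fixes P :: "('i::{finite,countable},'k::field_char_0) ext"
  assumes hP: "homogeneous 3 P" and sym: "\<And>i j. G i j = G j i" and J: "jac_Lp G P"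
    and surj: "\<And>j. \<exists>x. gv G x = (\<lambda>t. if t = j then 1 else 0)"
  shows "poisson G P P = 0"
proof (rule extract4[OF homog_PP[where G=G, OF hP]])
  fix a b c d
  obtain x where x: "gv G x = (\<lambda>t. if t = b then 1 else 0)" using surj by blast
  obtain y where y: "gv G y = (\<lambda>t. if t = c then 1 else 0)" using surj by blast
  obtain z where z: "gv G z = (\<lambda>t. if t = d then 1 else 0)" using surj by blast
  have "0 = (Lp G P x (Lp G P y z) + Lp G P y (Lp G P z x) + Lp G P z (Lp G P x y)) a"
    using J unfolding jac_Lp_def by simp
  also have "\<dots> = KK G P a b c d"
    unfolding plus_fun_apply jacobi_coord[of G P x y z a] x y z by (rule sum_delta3)
  finally show "left_der a (left_der b (left_der c (left_der d (poisson G P P)))) {} = 0"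
    unfolding Q4_KK[where G=G, OF hP sym] by simp
qed

lemma sum_plus2: "(\<Sum>i\<in>UNIV. (f :: 'x::finite + 'y::finite \<Rightarrow> 'k::comm_ring_1) i) = (\<Sum>a\<in>UNIV. f (Inl a)) + (\<Sum>b\<in>UNIV. f (Inr b))"
proof -
  have "(\<Sum>i\<in>UNIV. f i) = sum f (UNIV <+> UNIV)" by (simp only: UNIV_Plus_UNIV)
  also have "\<dots> = sum (f \<circ> Inl) UNIV + sum (f \<circ> Inr) UNIV" by (rule sum.Plus[OF finite finite])
  finally show ?thesis by (simp only: o_def)
qed

lemma sum3:
  fixes f :: "('a::finite + 'a) + 'b::finite \<Rightarrow> 'k::comm_ring_1"
  shows "(\<Sum>i\<in>UNIV. f i) = (\<Sum>a\<in>UNIV. f (Inl (Inl a))) + (\<Sum>a\<in>UNIV. f (Inl (Inr a))) + (\<Sum>b\<in>UNIV. f (Inr b))"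
  unfolding sum_plus2[of f] sum_plus2[of "\<lambda>a. f (Inl a)"] ..

lemma gram_d_sym:
  assumes "symmetric_form Bm"
  shows "gram_d Bm i j = gram_d Bm j i"
  using assms unfolding symmetric_form_def gram_d_def
  by (auto split: sum.splits)

lemma gram_d_simps[simp]:
  "gram_d Bm (Inl (Inl a)) (Inl (Inl a')) = 0"
  "gram_d Bm (Inl (Inl a)) (Inl (Inr a')) = (if a = a' then 1 else 0)"
  "gram_d Bm (Inl (Inr a)) (Inl (Inl a')) = (if a = a' then 1 else 0)"
  "gram_d Bm (Inl (Inr a)) (Inl (Inr a')) = 0"
  "gram_d Bm (Inl x) (Inr b) = 0"
  "gram_d Bm (Inr b) (Inl x) = 0"
  "gram_d Bm (Inr b) (Inr b') = Bm b b'"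
  by (simp_all add: gram_d_def split: sum.splits)

definition gvB :: "('b::finite \<Rightarrow> 'b \<Rightarrow> 'k::comm_ring_1) \<Rightarrow> ('b \<Rightarrow> 'k) \<Rightarrow> 'b \<Rightarrow> 'k" where
  "gvB Bm w b = (\<Sum>c\<in>UNIV. w c * Bm c b)"

lemma gv_gram:
  fixes x :: "('a::finite + 'a) + 'b::finite \<Rightarrow> 'k::comm_ring_1"
  shows "gv (gram_d Bm) x (Inl (Inl a)) = x (Inl (Inr a))"
    "gv (gram_d Bm) x (Inl (Inr a)) = x (Inl (Inl a))"
    "gv (gram_d Bm) x (Inr b) = gvB Bm (\<lambda>c. x (Inr c)) b"
  unfolding gv_def gvB_def by (subst sum3; simp add: if_distrib cong: if_cong)+

lemma vext_inj: "vext u = vext v \<Longrightarrow> u = v"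
proof (rule ext)
  fix m assume "vext u = vext v"
  then have "vext u {m} = vext v {m}" by simp
  then show "u m = v m" by (simp add: vext_single)
qed

lemma pp_nz:
  fixes \<alpha> :: "('i::{finite,countable},'k::comm_ring_1) ext"
  assumes "pp \<alpha> x y z \<noteq> 0"
  shows "\<alpha> {x, y, z} \<noteq> 0 \<and> x \<noteq> y \<and> y \<noteq> z \<and> x \<noteq> z"
proof -
  have e: "insert z (insert y {x}) = {x, y, z}" by auto
  have "pp \<alpha> x y z = (if y = x then 0 else lsg y {x} * (if z \<in> {y, x} then 0 else lsg z (insert y {x}) * \<alpha> (insert z (insert y {x}))))"
    unfolding pp_def left_der_empty by (simp add: left_der_apply')
  then show ?thesis using assms by (auto simp: e split: if_splits)
qed

definition knd :: "('a + 'a) + 'b \<Rightarrow> nat" where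
  "knd i = (case i of Inl (Inl _) \<Rightarrow> 0 | Inl (Inr _) \<Rightarrow> 1 | Inr _ \<Rightarrow> 2)"

lemma knd_simps[simp]: "knd (Inl (Inl a)) = 0" "knd (Inl (Inr a)) = 1" "knd (Inr b) = 2"
  by (simp_all add: knd_def)

definition cnt :: "nat \<Rightarrow> ('a + 'a) + 'b \<Rightarrow> ('a + 'a) + 'b \<Rightarrow> ('a + 'a) + 'b \<Rightarrow> nat" where
  "cnt k x y z = (if knd x = k then 1 else 0) + (if knd y = k then 1 else 0) + (if knd z = k then 1 else 0)"

lemma mu0:
  fixes \<mu> :: "(('a::finite + 'a) + 'b::finite, 'k::comm_ring_1) ext"
  assumes "in_S3_g \<mu>" "\<not> (knd x = 2 \<and> knd y = 2 \<and> knd z = 2)"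
  shows "pp \<mu> x y z = 0"
proof (rule ccontr)
  assume "pp \<mu> x y z \<noteq> 0"
  then have "\<mu> {x, y, z} \<noteq> 0" using pp_nz by blast
  then obtain b1 b2 b3 where "{x, y, z} = {Inr b1, Inr b2, Inr b3}"
    using assms(1) unfolding in_S3_g_def by blast
  then have "x \<in> {Inr b1, Inr b2, Inr b3}" "y \<in> {Inr b1, Inr b2, Inr b3}" "z \<in> {Inr b1, Inr b2, Inr b3}"
    by (metis insertI1 insert_commute)+
  then show False using assms(2) by auto
qed

lemma nu0:
  fixes \<nu> :: "(('a::finite + 'a) + 'b::finite, 'k::comm_ring_1) ext"
  assumes "in_L2hs_h \<nu>" "\<not> (knd x \<noteq> 2 \<and> knd y \<noteq> 2 \<and> knd z \<noteq> 2 \<and> cnt 1 x y z = 1)"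
  shows "pp \<nu> x y z = 0"
proof (rule ccontr)
  assume "pp \<nu> x y z \<noteq> 0"
  then have nz: "\<nu> {x, y, z} \<noteq> 0" and d: "x \<noteq> y" "y \<noteq> z" "x \<noteq> z" using pp_nz by blast+
  then obtain a1 a2 a3 where S: "{x, y, z} = {Inl (Inl a1), Inl (Inl a2), Inl (Inr a3)}"
    using assms(1) unfolding in_L2hs_h_def by blast
  then have m: "x \<in> {Inl (Inl a1), Inl (Inl a2), Inl (Inr a3)}" "y \<in> {Inl (Inl a1), Inl (Inl a2), Inl (Inr a3)}"
     "z \<in> {Inl (Inl a1), Inl (Inl a2), Inl (Inr a3)}"
    by (metis insertI1 insert_commute)+
  have h: "Inl (Inr a3) \<in> {x, y, z}" using S by simp
  show False using m h d assms(2) by (auto simp: cnt_def)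
qed

lemma psi0:
  fixes \<psi> :: "(('a::finite + 'a) + 'b::finite, 'k::comm_ring_1) ext"
  assumes "in_hs_L2g \<psi>" "\<not> (knd x \<noteq> 1 \<and> knd y \<noteq> 1 \<and> knd z \<noteq> 1 \<and> cnt 0 x y z = 1)"
  shows "pp \<psi> x y z = 0"
proof (rule ccontr)
  assume "pp \<psi> x y z \<noteq> 0"
  then have nz: "\<psi> {x, y, z} \<noteq> 0" and d: "x \<noteq> y" "y \<noteq> z" "x \<noteq> z" using pp_nz by blast+
  then obtain a b1 b2 where S: "{x, y, z} = {Inl (Inl a), Inr b1, Inr b2}"
    using assms(1) unfolding in_hs_L2g_def by blast
  then have m: "x \<in> {Inl (Inl a), Inr b1, Inr b2}" "y \<in> {Inl (Inl a), Inr b1, Inr b2}"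
     "z \<in> {Inl (Inl a), Inr b1, Inr b2}"
    by (metis insertI1 insert_commute)+
  have h: "Inl (Inl a) \<in> {x, y, z}" using S by simp
  show False using m h d assms(2) by (auto simp: cnt_def)
qed

lemma dcoord_simps[simp]:
  "dcoord f s w (Inl (Inl a)) = f a" "dcoord f s w (Inl (Inr a)) = s a" "dcoord f s w (Inr b) = w b"
  by (simp_all add: dcoord_def)

lemma gvB_zero[simp]: "gvB Bm 0 b = 0" by (simp add: gvB_def)
lemma gvB_zero'[simp]: "gvB Bm (\<lambda>c. 0) b = 0" by (simp add: gvB_def)

lemma card3: "x \<noteq> y \<Longrightarrow> y \<noteq> z \<Longrightarrow> x \<noteq> z \<Longrightarrow> card {x, y, z} = 3"
  by simp

locale mrs =
  fixes Bm :: "'b::finite \<Rightarrow> 'b \<Rightarrow> 'k::field_char_0"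
    and Lg :: "('b \<Rightarrow> 'k) \<Rightarrow> ('b \<Rightarrow> 'k) \<Rightarrow> ('b \<Rightarrow> 'k)"
    and Lh :: "('a::finite \<Rightarrow> 'k) \<Rightarrow> ('a \<Rightarrow> 'k) \<Rightarrow> ('a \<Rightarrow> 'k)"
    and \<mu> \<nu> \<psi> :: "(('a + 'a) + 'b, 'k) ext"
  assumes g_lie: "lie_bracket Lg"
    and B_sym: "symmetric_form Bm"
    and B_nondeg: "nondegenerate_form Bm"
    and B_inv: "invariant_form Bm Lg"
    and mu_S3g: "in_S3_g \<mu>"
    and mu_pot: "\<forall>a b. gvec (Lg a b) = poisson (gram_d Bm) (gvec a) (poisson (gram_d Bm) (gvec b) \<mu>)"
    and h_lie: "lie_bracket Lh"
    and nu_space: "in_L2hs_h \<nu>"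
    and nu_bracket: "\<forall>x y. hvec (Lh x y) = poisson (gram_d Bm) (hvec x) (poisson (gram_d Bm) (hvec y) \<nu>)"
    and psi_space: "in_hs_L2g \<psi>"
begin

lemma h_mu: "homogeneous 3 \<mu>"
  unfolding homogeneous_def
proof (intro allI impI)
  fix S assume "\<mu> S \<noteq> 0"
  then obtain b1 b2 b3 where "distinct [b1, b2, b3]" "S = {Inr b1, Inr b2, Inr b3}"
    using mu_S3g unfolding in_S3_g_def by blast
  then show "card S = 3" by simp
qed

lemma h_nu: "homogeneous 3 \<nu>"
  unfolding homogeneous_def
proof (intro allI impI)
  fix S assume "\<nu> S \<noteq> 0"
  then obtain a1 a2 a3 where "a1 \<noteq> a2" "S = {Inl (Inl a1), Inl (Inl a2), Inl (Inr a3)}"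
    using nu_space unfolding in_L2hs_h_def by blast
  then show "card S = 3" by simp
qed

lemma h_psi: "homogeneous 3 \<psi>"
  unfolding homogeneous_def
proof (intro allI impI)
  fix S assume "\<psi> S \<noteq> 0"
  then obtain a b1 b2 where "b1 \<noteq> b2" "S = {Inl (Inl a), Inr b1, Inr b2}"
    using psi_space unfolding in_hs_L2g_def by blast
  then show "card S = 3" by simp
qed

abbreviation "P \<equiv> \<mu> + \<nu> + \<psi>"
abbreviation "G \<equiv> gram_d Bm"

lemma hP: "homogeneous 3 P"
  by (intro homog_add h_mu h_nu h_psi)

lemma Gsym: "G i j = G j i"
  by (rule gram_d_sym[OF B_sym])

lemma ppP: "pp P x y z = pp \<mu> x y z + pp \<nu> x y z + pp \<psi> x y z"
  by (simp add: pp_add)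

lemmas zeros = mu0[OF mu_S3g] nu0[OF nu_space] psi0[OF psi_space]

lemma F1: "Lh s t a = (\<Sum>c\<in>UNIV. \<Sum>d\<in>UNIV. s c * t d * pp P (Inl (Inr a)) (Inl (Inl c)) (Inl (Inl d)))"
proof -
  have "vext (dcoord 0 (Lh s t) 0) = vext (Lp G \<nu> (dcoord 0 s 0) (dcoord 0 t 0))"
    using nu_bracket pot_Lp[OF h_nu] by simp
  then have "dcoord 0 (Lh s t) 0 = Lp G \<nu> (dcoord 0 s 0) (dcoord 0 t 0)" by (rule vext_inj)
  then have "Lh s t a = Lp G \<nu> (dcoord 0 s 0) (dcoord 0 t 0) (Inl (Inr a))"
    by (metis dcoord_simps(2))
  also have "\<dots> = (\<Sum>c\<in>UNIV. \<Sum>d\<in>UNIV. s c * t d * pp \<nu> (Inl (Inr a)) (Inl (Inl c)) (Inl (Inl d)))"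
    unfolding Lp_def by (simp add: sum3 gv_gram)
  also have "\<dots> = (\<Sum>c\<in>UNIV. \<Sum>d\<in>UNIV. s c * t d * pp P (Inl (Inr a)) (Inl (Inl c)) (Inl (Inl d)))"
    by (simp add: ppP zeros cnt_def)
  finally show ?thesis .
qed

lemma F2: "Lg u v c = (\<Sum>j\<in>UNIV. \<Sum>l\<in>UNIV. gvB Bm u j * gvB Bm v l * pp P (Inr c) (Inr j) (Inr l))"
proof -
  have "vext (dcoord 0 0 (Lg u v)) = vext (Lp G \<mu> (dcoord 0 0 u) (dcoord 0 0 v))"
    using mu_pot pot_Lp[OF h_mu] by simp
  then have "dcoord 0 0 (Lg u v) = Lp G \<mu> (dcoord 0 0 u) (dcoord 0 0 v)" by (rule vext_inj)
  then have "Lg u v c = Lp G \<mu> (dcoord 0 0 u) (dcoord 0 0 v) (Inr c)"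
    by (metis dcoord_simps(3))
  also have "\<dots> = (\<Sum>j\<in>UNIV. \<Sum>l\<in>UNIV. gvB Bm u j * gvB Bm v l * pp \<mu> (Inr c) (Inr j) (Inr l))"
    unfolding Lp_def by (simp add: sum3 gv_gram)
  also have "\<dots> = (\<Sum>j\<in>UNIV. \<Sum>l\<in>UNIV. gvB Bm u j * gvB Bm v l * pp P (Inr c) (Inr j) (Inr l))"
    by (simp add: ppP zeros cnt_def)
  finally show ?thesis .
qed

end

lemma poisson_vext_right:
  fixes \<alpha> :: "('i::{finite,countable},'k::comm_ring_1) ext"
  assumes h: "homogeneous k \<alpha>" and sym: "\<And>i j. G i j = G j i"
  shows "poisson G \<alpha> (vext v) = (\<Sum>i\<in>UNIV. ext_scale ((-1) ^ (k - 1) * gv G v i) (left_der i \<alpha>))"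
proof (rule ext)
  fix T
  have "poisson G \<alpha> (vext v) T = (\<Sum>i\<in>UNIV. \<Sum>j\<in>UNIV. G i j * (v j * ((-1) ^ (k - 1) * left_der i \<alpha> T)))"
    unfolding poisson_apply right_der_homog[OF h] left_der_vext wedge_cst_right by (simp add: mult_ac)
  also have "\<dots> = (\<Sum>i\<in>UNIV. ((-1) ^ (k - 1) * gv G v i) * left_der i \<alpha> T)"
    unfolding gv_def by (simp add: sum_distrib_right sum_distrib_left sym mult_ac)
  also have "\<dots> = (\<Sum>i\<in>UNIV. ext_scale ((-1) ^ (k - 1) * gv G v i) (left_der i \<alpha>)) T"
    by (simp add: sum_apply_fun)
  finally show "poisson G \<alpha> (vext v) T = (\<Sum>i\<in>UNIV. ext_scale ((-1) ^ (k - 1) * gv G v i) (left_der i \<alpha>)) T" .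
qed

context mrs
begin

lemma F3: "theta_psi Bm \<psi> s w c = (\<Sum>j\<in>UNIV. \<Sum>b\<in>UNIV. s j * gvB Bm w b * pp P (Inr c) (Inl (Inl j)) (Inr b))"
proof -
  let ?X = "poisson G (hvec s) \<psi>"
  have X: "?X = (\<Sum>j\<in>UNIV. ext_scale (gv G (dcoord 0 s 0) j) (left_der j \<psi>))"
    by (rule poisson_vext_left)
  have h2: "homogeneous 2 ?X" unfolding X
    using homog_ld[OF h_psi] by (intro homog_sum homog_scale) simp
  have "theta_psi Bm \<psi> s w c = poisson G ?X (gvec w) {Inr c}"
    unfolding theta_psi_def gpart_def ..
  also have "\<dots> = (\<Sum>i\<in>UNIV. - gv G (dcoord 0 0 w) i * (\<Sum>j\<in>UNIV. gv G (dcoord 0 s 0) j * pp \<psi> (Inr c) i j))"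
    unfolding poisson_vext_right[OF h2 Gsym] sum_apply_fun ext_scale_apply
    unfolding left_der_empty[symmetric] X left_der_sum left_der_scale sum_apply_fun ext_scale_apply pp_def
    by simp
  also have "\<dots> = (\<Sum>b\<in>UNIV. \<Sum>j\<in>UNIV. - (gvB Bm w b * (s j * pp \<psi> (Inr c) (Inr b) (Inl (Inl j)))))"
    by (simp add: sum3 gv_gram sum_distrib_left)
  also have "\<dots> = (\<Sum>j\<in>UNIV. \<Sum>b\<in>UNIV. - (gvB Bm w b * (s j * pp \<psi> (Inr c) (Inr b) (Inl (Inl j)))))"
    by (rule sum.swap)
  also have "\<dots> = (\<Sum>j\<in>UNIV. \<Sum>b\<in>UNIV. s j * gvB Bm w b * pp \<psi> (Inr c) (Inl (Inl j)) (Inr b))"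
    by (subst (2) pp_swap23) (simp add: mult_ac)
  also have "\<dots> = (\<Sum>j\<in>UNIV. \<Sum>b\<in>UNIV. s j * gvB Bm w b * pp P (Inr c) (Inl (Inl j)) (Inr b))"
    by (simp add: ppP zeros cnt_def)
  finally show ?thesis .
qed

end

context mrs
begin

abbreviation "th \<equiv> theta_psi Bm \<psi>"
abbreviation "DE \<equiv> double_extension Bm Lg Lh th"

lemma Lp_hh: "Lp G P x y (Inl (Inr a)) = (\<Sum>c\<in>UNIV. \<Sum>d\<in>UNIV. x (Inl (Inr c)) * y (Inl (Inr d)) * pp P (Inl (Inr a)) (Inl (Inl c)) (Inl (Inl d)))"
  unfolding Lp_def by (simp add: sum3 gv_gram ppP zeros cnt_def)

lemma Lp_gg: "Lp G P x y (Inr c) =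
   (\<Sum>j\<in>UNIV. \<Sum>l\<in>UNIV. gvB Bm (\<lambda>b. x (Inr b)) j * gvB Bm (\<lambda>b. y (Inr b)) l * pp P (Inr c) (Inr j) (Inr l))
 + (\<Sum>j\<in>UNIV. \<Sum>b\<in>UNIV. x (Inl (Inr j)) * gvB Bm (\<lambda>b. y (Inr b)) b * pp P (Inr c) (Inl (Inl j)) (Inr b))
 + (\<Sum>b\<in>UNIV. \<Sum>j\<in>UNIV. gvB Bm (\<lambda>b. x (Inr b)) b * y (Inl (Inr j)) * pp P (Inr c) (Inr b) (Inl (Inl j)))"
  unfolding Lp_def ppP by (simp add: sum3 gv_gram zeros cnt_def sum.distrib add_ac)

lemma Lp_hs: "Lp G P x y (Inl (Inl a)) =
   (\<Sum>c\<in>UNIV. \<Sum>d\<in>UNIV. x (Inl (Inr c)) * y (Inl (Inl d)) * pp P (Inl (Inl a)) (Inl (Inl c)) (Inl (Inr d)))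
 + (\<Sum>c\<in>UNIV. \<Sum>d\<in>UNIV. x (Inl (Inl c)) * y (Inl (Inr d)) * pp P (Inl (Inl a)) (Inl (Inr c)) (Inl (Inl d)))
 + (\<Sum>b\<in>UNIV. \<Sum>b'\<in>UNIV. gvB Bm (\<lambda>b. x (Inr b)) b * gvB Bm (\<lambda>b. y (Inr b)) b' * pp P (Inl (Inl a)) (Inr b) (Inr b'))"
  unfolding Lp_def ppP by (simp add: sum3 gv_gram zeros cnt_def sum.distrib add_ac)

lemma DE_coords:
  "DE x y (Inl (Inr a)) = Lh (\<lambda>a. x (Inl (Inr a))) (\<lambda>a. y (Inl (Inr a))) a"
  "DE x y (Inr c) = Lg (\<lambda>b. x (Inr b)) (\<lambda>b. y (Inr b)) c + th (\<lambda>a. x (Inl (Inr a))) (\<lambda>b. y (Inr b)) c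
      - th (\<lambda>a. y (Inl (Inr a))) (\<lambda>b. x (Inr b)) c"
  "DE x y (Inl (Inl a)) = coad Lh (\<lambda>a. y (Inl (Inr a))) (\<lambda>a. x (Inl (Inl a))) a
      - coad Lh (\<lambda>a. x (Inl (Inr a))) (\<lambda>a. y (Inl (Inl a))) a + mr_omega Bm th (\<lambda>b. x (Inr b)) (\<lambda>b. y (Inr b)) a"
  by (simp_all add: double_extension_def of_triple_def mr_bracket_def to_triple_def)

lemma coad_exp: "coad Lh s f a = (\<Sum>c\<in>UNIV. \<Sum>j\<in>UNIV. f c * s j * pp P (Inl (Inr c)) (Inl (Inl j)) (Inl (Inl a)))"
proof -
  have "coad Lh s f a = (\<Sum>c\<in>UNIV. f c * Lh s (basis_vec a) c)"
    unfolding coad_def dpair_def ..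
  also have "\<dots> = (\<Sum>c\<in>UNIV. f c * (\<Sum>j\<in>UNIV. s j * pp P (Inl (Inr c)) (Inl (Inl j)) (Inl (Inl a))))"
    unfolding F1 by (simp add: basis_vec_def if_distrib if_distribR sum.delta' cong: if_cong)
  finally show ?thesis by (simp add: sum_distrib_left mult_ac)
qed

lemma omega_exp: "mr_omega Bm th w1 w2 a = (\<Sum>i\<in>UNIV. \<Sum>b\<in>UNIV. gvB Bm w1 b * gvB Bm w2 i * pp P (Inr i) (Inl (Inl a)) (Inr b))"
proof -
  have t: "th (basis_vec a) w1 i = (\<Sum>b\<in>UNIV. gvB Bm w1 b * pp P (Inr i) (Inl (Inl a)) (Inr b))" for i
  proof -
    have "th (basis_vec a) w1 i = (\<Sum>j\<in>UNIV. if j = a then (\<Sum>b\<in>UNIV. gvB Bm w1 b * pp P (Inr i) (Inl (Inl j)) (Inr b)) else 0)"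
      unfolding F3 by (rule sum.cong) (simp_all add: basis_vec_def)
    then show ?thesis by simp
  qed
  have g: "(\<Sum>j\<in>UNIV. Bm i j * w2 j) = gvB Bm w2 i" for i
    using B_sym unfolding gvB_def symmetric_form_def by (simp add: mult_ac)
  have "mr_omega Bm th w1 w2 a = (\<Sum>i\<in>UNIV. th (basis_vec a) w1 i * (\<Sum>j\<in>UNIV. Bm i j * w2 j))"
    unfolding mr_omega_def bform_def by (simp add: sum_distrib_left mult_ac)
  also have "\<dots> = (\<Sum>i\<in>UNIV. (\<Sum>b\<in>UNIV. gvB Bm w1 b * pp P (Inr i) (Inl (Inl a)) (Inr b)) * gvB Bm w2 i)"
    unfolding t g ..
  finally show ?thesis by (simp add: sum_distrib_right sum_distrib_left mult_ac)
qed

lemma DE_Lp: "DE x y = Lp G P x y"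
proof (rule ext)
  fix m
  show "DE x y m = Lp G P x y m"
  proof (cases m)
    case (Inl m')
    note mI = this
    show ?thesis
    proof (cases m')
      case (Inr a)
      show ?thesis unfolding mI \<open>m' = Inr a\<close> DE_coords Lp_hh F1 ..
    next
      case (Inl a)
      have b1: "(\<Sum>c\<in>UNIV. \<Sum>d\<in>UNIV. x (Inl (Inr c)) * y (Inl (Inl d)) * pp P (Inl (Inl a)) (Inl (Inl c)) (Inl (Inr d)))
         = - coad Lh (\<lambda>a. x (Inl (Inr a))) (\<lambda>a. y (Inl (Inl a))) a"
      proof -
        have "(\<Sum>c\<in>UNIV. \<Sum>d\<in>UNIV. x (Inl (Inr c)) * y (Inl (Inl d)) * pp P (Inl (Inl a)) (Inl (Inl c)) (Inl (Inr d)))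
          = (\<Sum>c\<in>UNIV. \<Sum>d\<in>UNIV. - (y (Inl (Inl d)) * x (Inl (Inr c)) * pp P (Inl (Inr d)) (Inl (Inl c)) (Inl (Inl a))))"
        proof (intro sum.cong refl)
          fix c d
          have "pp P (Inl (Inl a)) (Inl (Inl c)) (Inl (Inr d)) = - pp P (Inl (Inr d)) (Inl (Inl c)) (Inl (Inl a))"
            using pp_cyc[of P "Inl (Inr d)" "Inl (Inl a)" "Inl (Inl c)"] pp_swap23[of P "Inl (Inr d)" "Inl (Inl a)" "Inl (Inl c)"]
            by simp
          then show "x (Inl (Inr c)) * y (Inl (Inl d)) * pp P (Inl (Inl a)) (Inl (Inl c)) (Inl (Inr d)) =
            - (y (Inl (Inl d)) * x (Inl (Inr c)) * pp P (Inl (Inr d)) (Inl (Inl c)) (Inl (Inl a)))" by simp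
        qed
        also have "\<dots> = (\<Sum>d\<in>UNIV. \<Sum>c\<in>UNIV. - (y (Inl (Inl d)) * x (Inl (Inr c)) * pp P (Inl (Inr d)) (Inl (Inl c)) (Inl (Inl a))))"
          by (rule sum.swap)
        finally show ?thesis unfolding coad_exp by (simp add: sum_negf)
      qed
      have b2: "(\<Sum>c\<in>UNIV. \<Sum>d\<in>UNIV. x (Inl (Inl c)) * y (Inl (Inr d)) * pp P (Inl (Inl a)) (Inl (Inr c)) (Inl (Inl d)))
         = coad Lh (\<lambda>a. y (Inl (Inr a))) (\<lambda>a. x (Inl (Inl a))) a"
        unfolding coad_exp using pp_cyc[of P "Inl (Inl a)"] by simp
      have b3: "(\<Sum>b\<in>UNIV. \<Sum>b'\<in>UNIV. gvB Bm (\<lambda>b. x (Inr b)) b * gvB Bm (\<lambda>b. y (Inr b)) b' * pp P (Inl (Inl a)) (Inr b) (Inr b'))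
         = mr_omega Bm th (\<lambda>b. x (Inr b)) (\<lambda>b. y (Inr b)) a"
      proof -
        have "(\<Sum>b\<in>UNIV. \<Sum>b'\<in>UNIV. gvB Bm (\<lambda>b. x (Inr b)) b * gvB Bm (\<lambda>b. y (Inr b)) b' * pp P (Inl (Inl a)) (Inr b) (Inr b'))
          = (\<Sum>b'\<in>UNIV. \<Sum>b\<in>UNIV. gvB Bm (\<lambda>b. x (Inr b)) b * gvB Bm (\<lambda>b. y (Inr b)) b' * pp P (Inl (Inl a)) (Inr b) (Inr b'))"
          by (rule sum.swap)
        also have "\<dots> = mr_omega Bm th (\<lambda>b. x (Inr b)) (\<lambda>b. y (Inr b)) a"
          unfolding omega_exp using pp_cyc[of P "Inr _" "Inl (Inl a)"] by simp
        finally show ?thesis .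
      qed
      show ?thesis unfolding mI \<open>m' = Inl a\<close> DE_coords Lp_hs b1 b2 b3 by simp
    qed
  next
    case (Inr c)
    note mc = this
    have b3: "(\<Sum>b\<in>UNIV. \<Sum>j\<in>UNIV. gvB Bm (\<lambda>b. x (Inr b)) b * y (Inl (Inr j)) * pp P (Inr c) (Inr b) (Inl (Inl j)))
       = - th (\<lambda>a. y (Inl (Inr a))) (\<lambda>b. x (Inr b)) c"
    proof -
      have "(\<Sum>b\<in>UNIV. \<Sum>j\<in>UNIV. gvB Bm (\<lambda>b. x (Inr b)) b * y (Inl (Inr j)) * pp P (Inr c) (Inr b) (Inl (Inl j)))
        = (\<Sum>j\<in>UNIV. \<Sum>b\<in>UNIV. gvB Bm (\<lambda>b. x (Inr b)) b * y (Inl (Inr j)) * pp P (Inr c) (Inr b) (Inl (Inl j)))"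
        by (rule sum.swap)
      also have "\<dots> = - th (\<lambda>a. y (Inl (Inr a))) (\<lambda>b. x (Inr b)) c"
        unfolding F3 using pp_swap23[of P "Inr c" "Inr _" "Inl (Inl _)"] by (simp add: sum_negf mult_ac)
      finally show ?thesis .
    qed
    show ?thesis unfolding mc DE_coords Lp_gg b3 F2 F3 by simp
  qed
qed

end

lemma Bm_surj:
  fixes Bm :: "'b::finite \<Rightarrow> 'b \<Rightarrow> 'k::field"
  assumes nd: "nondegenerate_form Bm"
  shows "\<exists>w. gvB Bm w = (\<lambda>t. if t = b then 1 else 0)"
proof -
  define A :: "'k^'b^'b" where "A = (\<chi> i j. Bm j i)"
  have lin: "Vector_Spaces.linear (*s) (*s) ((*v) A)" by (rule matrix_vector_mul_linear_gen)
  have inj: "inj ((*v) A)"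
  proof (rule injI)
    fix v v' assume e: "A *v v = A *v v'"
    define u where "u = (\<lambda>j. v$j - v'$j)"
    have z: "(\<Sum>i\<in>UNIV. u i * Bm i j) = 0" for j
    proof -
      have "(A *v v)$j = (A *v v')$j" using e by simp
      then have "(\<Sum>i\<in>UNIV. Bm i j * v$i) = (\<Sum>i\<in>UNIV. Bm i j * v'$i)"
        unfolding A_def matrix_vector_mult_def by simp
      then show ?thesis unfolding u_def by (simp add: algebra_simps sum_subtractf)
    qed
    have "bform Bm u y = 0" for y
    proof -
      have "bform Bm u y = (\<Sum>j\<in>UNIV. (\<Sum>i\<in>UNIV. u i * Bm i j) * y j)"
        unfolding bform_def by (subst sum.swap) (simp add: sum_distrib_right)
      then show ?thesis using z by simp
    qed
    then have "u = 0" using nd unfolding nondegenerate_form_def by blast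
    then show "v = v'" unfolding u_def by (simp add: vec_eq_iff fun_eq_iff)
  qed
  have "surj ((*v) A)" by (rule vec.linear_inj_imp_surj[OF lin inj])
  then obtain v where v: "A *v v = axis b 1" by (metis surjD)
  show ?thesis
  proof (intro exI ext)
    fix t
    have "gvB Bm (\<lambda>c. v$c) t = (A *v v)$t"
      unfolding gvB_def A_def matrix_vector_mult_def by (simp add: mult.commute)
    then show "gvB Bm (\<lambda>c. v$c) t = (if t = b then 1 else 0)" unfolding v axis_def by simp
  qed
qed

lemma fun_eq3:
  fixes f g :: "('x + 'x) + 'y \<Rightarrow> 'z"
  assumes "\<And>a. f (Inl (Inl a)) = g (Inl (Inl a))" "\<And>a. f (Inl (Inr a)) = g (Inl (Inr a))" "\<And>b. f (Inr b) = g (Inr b)"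
  shows "f = g"
proof (rule ext)
  fix t show "f t = g t"
  proof (cases t)
    case (Inl t') then show ?thesis by (cases t') (simp_all add: assms)
  next
    case (Inr b) then show ?thesis by (simp add: assms)
  qed
qed

context mrs
begin

lemma G_surj: "\<exists>x. gv G x = (\<lambda>t. if t = j then 1 else 0)"
proof (cases j)
  case (Inl j')
  then show ?thesis
  proof (cases j')
    case (Inl a)
    have "gv G (\<lambda>t. if t = Inl (Inr a) then 1 else 0) = (\<lambda>t. if t = j then 1 else 0)"
      unfolding \<open>j = Inl j'\<close> \<open>j' = Inl a\<close> by (rule fun_eq3) (simp_all add: gv_gram gvB_def)
    then show ?thesis by blast
  next
    case (Inr a)
    have "gv G (\<lambda>t. if t = Inl (Inl a) then 1 else 0) = (\<lambda>t. if t = j then 1 else 0)"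
      unfolding \<open>j = Inl j'\<close> \<open>j' = Inr a\<close> by (rule fun_eq3) (simp_all add: gv_gram gvB_def)
    then show ?thesis by blast
  qed
next
  case (Inr b)
  obtain w where w: "gvB Bm w = (\<lambda>t. if t = b then 1 else 0)" using Bm_surj[OF B_nondeg] by blast
  have "gv G (dcoord 0 0 w) = (\<lambda>t. if t = j then 1 else 0)"
    unfolding \<open>j = Inr b\<close> by (rule fun_eq3) (simp_all add: gv_gram w)
  then show ?thesis by blast
qed

lemma derpot: "derived_potential G DE P"
  unfolding derived_potential_def using hP pot_Lp[OF hP] DE_Lp by simp

lemma th_add_s: "th (s + s') w = th s w + th s' w"
  by (rule ext) (simp add: F3 algebra_simps sum.distrib)

lemma th_smul_s: "th (smul c s) w = smul c (th s w)"
  by (rule ext) (simp add: F3 smul_def algebra_simps sum_distrib_left)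

lemma gvB_add: "gvB Bm (w + w') b = gvB Bm w b + gvB Bm w' b"
  by (simp add: gvB_def algebra_simps sum.distrib)

lemma gvB_smul: "gvB Bm (\<lambda>i. c * w i) b = c * gvB Bm w b"
  by (simp add: gvB_def algebra_simps sum_distrib_left)

lemma th_add_w: "th s (w + w') = th s w + th s w'"
  by (rule ext) (simp add: F3 gvB_add algebra_simps sum.distrib)

lemma th_smul_w: "th s (smul c w) = smul c (th s w)"
  by (rule ext) (simp add: F3 gvB_smul smul_def algebra_simps sum_distrib_left)

lemma th_lin_s: "lin_map (\<lambda>s. th s w)"
  unfolding lin_map_def by (simp add: th_add_s th_smul_s)

lemma th_lin_w: "lin_map (th s)"
  unfolding lin_map_def by (simp add: th_add_w th_smul_w)

lemma preserves: "preserves_form Bm (th s)"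
  unfolding preserves_form_def
proof (intro allI)
  fix x y
  define T where "T c b = (\<Sum>j\<in>UNIV. s j * pp P (Inr c) (Inl (Inl j)) (Inr b))" for c b
  have Tanti: "T c b = - T b c" for c b
  proof -
    have "pp P (Inr c) (Inl (Inl j)) (Inr b) = - pp P (Inr b) (Inl (Inl j)) (Inr c)" for j
      using pp_swap12[of P "Inr c" "Inl (Inl j)" "Inr b"] pp_swap23[of P "Inl (Inl j)" "Inr c" "Inr b"]
        pp_swap12[of P "Inl (Inl j)" "Inr b" "Inr c"] by simp
    then show ?thesis unfolding T_def by (simp add: sum_negf)
  qed
  have thT: "th s w c = (\<Sum>b\<in>UNIV. gvB Bm w b * T c b)" for w c
    unfolding F3 T_def by (subst sum.swap) (simp add: sum_distrib_left mult_ac)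
  have symB: "Bm i j = Bm j i" for i j using B_sym unfolding symmetric_form_def by blast
  have gs: "gvB Bm v c = (\<Sum>j\<in>UNIV. Bm c j * v j)" for v c
    unfolding gvB_def by (rule sum.cong[OF refl]) (metis symB mult.commute)
  have bf: "bform Bm u v = (\<Sum>c\<in>UNIV. u c * gvB Bm v c)" for u v
    unfolding bform_def gs by (simp add: sum_distrib_left mult_ac)
  have bf': "bform Bm u v = (\<Sum>c\<in>UNIV. gvB Bm u c * v c)" for u v
    unfolding bform_def gvB_def by (subst sum.swap) (simp add: sum_distrib_right sum_distrib_left mult_ac)
  have "bform Bm (th s x) y = (\<Sum>c\<in>UNIV. \<Sum>b\<in>UNIV. gvB Bm x b * gvB Bm y c * T c b)"
    unfolding bf thT by (simp add: sum_distrib_right sum_distrib_left mult_ac)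
  moreover have "bform Bm x (th s y) = (\<Sum>c\<in>UNIV. \<Sum>b\<in>UNIV. gvB Bm x c * gvB Bm y b * T c b)"
    unfolding bf' thT by (simp add: sum_distrib_left mult_ac)
  moreover have "\<dots> = (\<Sum>b\<in>UNIV. \<Sum>c\<in>UNIV. gvB Bm x c * gvB Bm y b * T c b)" by (rule sum.swap)
  moreover have "\<dots> = - (\<Sum>c\<in>UNIV. \<Sum>b\<in>UNIV. gvB Bm x b * gvB Bm y c * T c b)"
    by (subst Tanti) (simp add: sum_negf)
  ultimately show "bform Bm (th s x) y + bform Bm x (th s y) = 0" by simp
qed

end

lemma lin_zero: "lin_map D \<Longrightarrow> D 0 = 0"
  unfolding lin_map_def by (metis add_cancel_right_right add_0)

lemma lin_add: "lin_map D \<Longrightarrow> D (x + y) = D x + D y"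
  unfolding lin_map_def by blast

lemma lin_diff: "lin_map D \<Longrightarrow> D (x - y) = D x - D y"
  unfolding lin_map_def by (metis add_diff_cancel diff_add_cancel eq_diff_eq)

lemma lin_uminus: "lin_map D \<Longrightarrow> D (- x) = - D x"
  using lin_diff[of D 0 x] lin_zero[of D] by simp

lemma lam0: "(\<lambda>x. 0) = (0 :: 'x \<Rightarrow> 'y::zero)" by (rule ext) simp

lemma KK_anti1:
  fixes P :: "('i::{finite,countable},'k::field_char_0) ext"
  assumes hP: "homogeneous 3 P" and sym: "\<And>i j. G i j = G j i"
  shows "KK G P m j r s = - KK G P j m r s"
proof -
  have "2 * KK G P m j r s = - (2 * KK G P j m r s)"
    unfolding Q4_KK[where G=G, OF hP sym, symmetric] by (subst left_der_anticomm) simp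
  then show ?thesis by simp
qed

lemma KK_anti2:
  fixes P :: "('i::{finite,countable},'k::field_char_0) ext"
  assumes hP: "homogeneous 3 P" and sym: "\<And>i j. G i j = G j i"
  shows "KK G P m j r s = - KK G P m r j s"
proof -
  have "2 * KK G P m j r s = - (2 * KK G P m r j s)"
    unfolding Q4_KK[where G=G, OF hP sym, symmetric] by (subst (2) left_der_anticomm) (simp add: left_der_uminus)
  then show ?thesis by simp
qed

lemma KK_anti3:
  fixes P :: "('i::{finite,countable},'k::field_char_0) ext"
  assumes hP: "homogeneous 3 P" and sym: "\<And>i j. G i j = G j i"
  shows "KK G P m j r s = - KK G P m j s r"
proof -
  have "2 * KK G P m j r s = - (2 * KK G P m j s r)"
    unfolding Q4_KK[where G=G, OF hP sym, symmetric] by (subst (3) left_der_anticomm) (simp add: left_der_uminus)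
  then show ?thesis by simp
qed

definition gp :: "(('a + 'a) + 'b \<Rightarrow> 'k) \<Rightarrow> 'b \<Rightarrow> 'k" where "gp x = (\<lambda>b. x (Inr b))"
definition hp :: "(('a + 'a) + 'b \<Rightarrow> 'k) \<Rightarrow> 'a \<Rightarrow> 'k" where "hp x = (\<lambda>a. x (Inl (Inr a)))"

lemma gp_add: "gp (x + y) = gp x + gp y" by (rule ext) (simp add: gp_def)
lemma hp_add: "hp (x + y) = hp x + hp y" by (rule ext) (simp add: hp_def)

context mrs
begin

lemma Lg_lin1: "lin_map (\<lambda>x. Lg x y)" using g_lie unfolding lie_bracket_def by blast
lemma Lg_lin2: "lin_map (\<lambda>y. Lg x y)" using g_lie unfolding lie_bracket_def by blast
lemma Lh_lin1: "lin_map (\<lambda>x. Lh x y)" using h_lie unfolding lie_bracket_def by blast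
lemma Lh_lin2: "lin_map (\<lambda>y. Lh x y)" using h_lie unfolding lie_bracket_def by blast

lemma Lg_simps:
  "Lg (a + b) c = Lg a c + Lg b c" "Lg a (b + c) = Lg a b + Lg a c"
  "Lg (a - b) c = Lg a c - Lg b c" "Lg a (b - c) = Lg a b - Lg a c"
  "Lg 0 c = 0" "Lg a 0 = 0" "Lg (- a) c = - Lg a c" "Lg a (- c) = - Lg a c"
  using lin_add[OF Lg_lin1] lin_add[OF Lg_lin2] lin_diff[OF Lg_lin1] lin_diff[OF Lg_lin2]
    lin_zero[OF Lg_lin1] lin_zero[OF Lg_lin2] lin_uminus[OF Lg_lin1] lin_uminus[OF Lg_lin2] by auto

lemma Lh_simps:
  "Lh 0 c = 0" "Lh a 0 = 0"
  using lin_zero[OF Lh_lin1] lin_zero[OF Lh_lin2] by auto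

lemma Lg_anti: "Lg a b = - Lg b a"
proof -
  have "Lg (a + b) (a + b) = 0" using g_lie unfolding lie_bracket_def by blast
  moreover have "Lg a a = 0" "Lg b b = 0" using g_lie unfolding lie_bracket_def by blast+
  ultimately show ?thesis by (simp add: Lg_simps eq_neg_iff_add_eq_0 add.commute)
qed

lemma Lg_jac: "Lg a (Lg b c) = - Lg b (Lg c a) - Lg c (Lg a b)"
proof -
  have "Lg a (Lg b c) + Lg b (Lg c a) + Lg c (Lg a b) = 0" using g_lie unfolding lie_bracket_def by blast
  then show ?thesis by (simp add: eq_neg_iff_add_eq_0 algebra_simps)
qed

lemma Lh_jac: "Lh a (Lh b c) + Lh b (Lh c a) + Lh c (Lh a b) = 0"
  using h_lie unfolding lie_bracket_def by blast

lemma th_lin_s': "lin_map (\<lambda>s. th s w)" by (rule th_lin_s)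

lemma th_simps:
  "th (a + b) w = th a w + th b w" "th s (v + w) = th s v + th s w"
  "th (a - b) w = th a w - th b w" "th s (v - w) = th s v - th s w"
  "th 0 w = 0" "th s 0 = 0" "th (- a) w = - th a w" "th s (- w) = - th s w"
  using lin_add[OF th_lin_s] lin_add[OF th_lin_w] lin_diff[OF th_lin_s] lin_diff[OF th_lin_w]
    lin_zero[OF th_lin_s] lin_zero[OF th_lin_w] lin_uminus[OF th_lin_s] lin_uminus[OF th_lin_w] by auto

lemma gp_DE: "gp (DE x y) = Lg (gp x) (gp y) + th (hp x) (gp y) - th (hp y) (gp x)"
  by (rule ext) (simp add: gp_def hp_def DE_coords)

lemma hp_DE: "hp (DE x y) = Lh (hp x) (hp y)"
  by (rule ext) (simp add: hp_def DE_coords)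

definition JG where
  "JG w1 w2 w3 s1 s2 s3 =
    Lg w1 (Lg w2 w3 + th s2 w3 - th s3 w2) + th s1 (Lg w2 w3 + th s2 w3 - th s3 w2) - th (Lh s2 s3) w1
  + (Lg w2 (Lg w3 w1 + th s3 w1 - th s1 w3) + th s2 (Lg w3 w1 + th s3 w1 - th s1 w3) - th (Lh s3 s1) w2)
  + (Lg w3 (Lg w1 w2 + th s1 w2 - th s2 w1) + th s3 (Lg w1 w2 + th s1 w2 - th s2 w1) - th (Lh s1 s2) w3)"

lemma gp_JDE: "gp (DE x (DE y z) + DE y (DE z x) + DE z (DE x y)) = JG (gp x) (gp y) (gp z) (hp x) (hp y) (hp z)"
  unfolding gp_add gp_DE hp_DE JG_def by simp

lemma hp_JDE: "hp (DE x (DE y z) + DE y (DE z x) + DE z (DE x y)) = Lh (hp x) (Lh (hp y) (hp z)) + Lh (hp y) (Lh (hp z) (hp x)) + Lh (hp z) (Lh (hp x) (hp y))"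
  unfolding hp_add hp_DE ..

end

lemma gp_dcoord[simp]: "gp (dcoord f s w) = w" by (rule ext) (simp add: gp_def)
lemma hp_dcoord[simp]: "hp (dcoord f s w) = s" by (rule ext) (simp add: hp_def)

context mrs
begin

lemma JG_zero:
  assumes hom: "lie_hom_to_der Lh Lg th"
  shows "JG w1 w2 w3 s1 s2 s3 = 0"
proof -
  have der: "th s (Lg a b) = Lg (th s a) b + Lg a (th s b)" for s a b
    using hom unfolding lie_hom_to_der_def is_derivation_def by blast
  have hm: "th (Lh s t) w = th s (th t w) - th t (th s w)" for s t w
    using hom unfolding lie_hom_to_der_def by simp
  have ant: "Lg a (th s b) = - Lg (th s b) a" for a s b by (rule Lg_anti)
  show ?thesis unfolding JG_def
    by (simp add: Lg_simps th_simps der hm ant Lg_jac[of w1 w2 w3] algebra_simps)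
qed

lemma hom_from_JG:
  assumes J: "\<And>w1 w2 w3 s1 s2 s3. JG w1 w2 w3 s1 s2 s3 = 0"
  shows "lie_hom_to_der Lh Lg th"
  unfolding lie_hom_to_der_def is_derivation_def
proof (intro conjI allI th_lin_s th_lin_w)
  fix s x y
  have "JG 0 x y s 0 0 = 0" by (rule J)
  then have "th s (Lg x y) - Lg x (th s y) + Lg y (th s x) = 0"
    unfolding JG_def by (simp add: Lg_simps th_simps Lh_simps algebra_simps)
  then show "th s (Lg x y) = Lg (th s x) y + Lg x (th s y)"
    using Lg_anti[of y "th s x"] by (simp add: algebra_simps eq_neg_iff_add_eq_0)
next
  fix s t
  show "th (Lh s t) = (\<lambda>w. th s (th t w) - th t (th s w))"
  proof (rule ext)
    fix w
    have "JG 0 0 w s t 0 = 0" by (rule J)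
    then have "th s (th t w) - th t (th s w) - th (Lh s t) w = 0"
      unfolding JG_def by (simp add: Lg_simps th_simps Lh_simps algebra_simps)
    then show "th (Lh s t) w = th s (th t w) - th t (th s w)" by (simp add: algebra_simps)
  qed
qed

lemma Jac_DE_Lp: "Lp G P x (Lp G P y z) + Lp G P y (Lp G P z x) + Lp G P z (Lp G P x y) = DE x (DE y z) + DE y (DE z x) + DE z (DE x y)"
  unfolding DE_Lp ..

lemma hom_from_jac:
  assumes J: "jac_Lp G P"
  shows "lie_hom_to_der Lh Lg th"
proof (rule hom_from_JG)
  fix w1 w2 w3 s1 s2 s3
  have "DE (dcoord 0 s1 w1) (DE (dcoord 0 s2 w2) (dcoord 0 s3 w3)) + DE (dcoord 0 s2 w2) (DE (dcoord 0 s3 w3) (dcoord 0 s1 w1))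
     + DE (dcoord 0 s3 w3) (DE (dcoord 0 s1 w1) (dcoord 0 s2 w2)) = 0"
    using J unfolding jac_Lp_def Jac_DE_Lp by blast
  then have "gp (DE (dcoord 0 s1 w1) (DE (dcoord 0 s2 w2) (dcoord 0 s3 w3)) + DE (dcoord 0 s2 w2) (DE (dcoord 0 s3 w3) (dcoord 0 s1 w1))
     + DE (dcoord 0 s3 w3) (DE (dcoord 0 s1 w1) (dcoord 0 s2 w2))) = 0"
    by (simp add: gp_def lam0)
  then show "JG w1 w2 w3 s1 s2 s3 = 0" unfolding gp_JDE by simp
qed

lemma KK_hs4: "KK G P (Inl (Inl a)) (Inl (Inl b)) (Inl (Inl c)) (Inl (Inl d)) = 0"
  unfolding KK_def SS_def ppP by (simp add: sum3 zeros cnt_def)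

lemma KK_nonhs:
  assumes hom: "lie_hom_to_der Lh Lg th" and m: "knd m \<noteq> 0"
  shows "KK G P m j r s = 0"
proof -
  obtain x where x: "gv G x = (\<lambda>t. if t = j then 1 else 0)" using G_surj by blast
  obtain y where y: "gv G y = (\<lambda>t. if t = r then 1 else 0)" using G_surj by blast
  obtain z where z: "gv G z = (\<lambda>t. if t = s then 1 else 0)" using G_surj by blast
  have "KK G P m j r s = (Lp G P x (Lp G P y z) + Lp G P y (Lp G P z x) + Lp G P z (Lp G P x y)) m"
    unfolding plus_fun_apply jacobi_coord[of G P x y z m] x y z by (rule sum_delta3[symmetric])
  also have "\<dots> = (DE x (DE y z) + DE y (DE z x) + DE z (DE x y)) m" unfolding Jac_DE_Lp ..
  also have "\<dots> = 0"
  proof (cases m)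
    case (Inr c)
    have "gp (DE x (DE y z) + DE y (DE z x) + DE z (DE x y)) = 0"
      unfolding gp_JDE by (rule JG_zero[OF hom])
    then show ?thesis unfolding Inr gp_def by (metis zero_fun_apply)
  next
    case (Inl m')
    then obtain a where ma: "m = Inl (Inr a)" using m by (cases m') auto
    have "hp (DE x (DE y z) + DE y (DE z x) + DE z (DE x y)) = 0"
      unfolding hp_JDE by (rule Lh_jac)
    then show ?thesis unfolding ma hp_def by (metis zero_fun_apply)
  qed
  finally show ?thesis .
qed

lemma jac_from_hom:
  assumes hom: "lie_hom_to_der Lh Lg th"
  shows "jac_Lp G P"
proof -
  have a1: "KK G P m j r s = - KK G P j m r s" for m j r s by (rule KK_anti1[OF hP Gsym])
  have a2: "KK G P m j r s = - KK G P m r j s" for m j r s by (rule KK_anti2[OF hP Gsym])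
  have a3: "KK G P m j r s = - KK G P m j s r" for m j r s by (rule KK_anti3[OF hP Gsym])
  have nz: "KK G P m j r s = 0" if "knd m \<noteq> 0" for m j r s by (rule KK_nonhs[OF hom that])
  have K: "KK G P m j r s = 0" for m j r s
  proof (cases "knd m \<noteq> 0")
    case True then show ?thesis by (rule nz)
  next
    case m0: False
    show ?thesis
    proof (cases "knd j \<noteq> 0")
      case True then show ?thesis using a1[of m j r s] nz[of j m r s] by simp
    next
      case j0: False
      show ?thesis
      proof (cases "knd r \<noteq> 0")
        case True then show ?thesis using a2[of m j r s] a1[of m r j s] nz[of r m j s] by simp
      next
        case r0: False
        show ?thesis
        proof (cases "knd s \<noteq> 0")
          case True then show ?thesis using a3[of m j r s] a2[of m j s r] a1[of m s j r] nz[of s m j r] by simp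
        next
          case s0: False
          have "\<exists>a. t = Inl (Inl a)" if "knd t = 0" for t :: "('a + 'a) + 'b"
          proof (cases t)
            case (Inl u) then show ?thesis using that by (cases u) auto
          next
            case (Inr b) then show ?thesis using that by simp
          qed
          then obtain a b c d where "m = Inl (Inl a)" "j = Inl (Inl b)" "r = Inl (Inl c)" "s = Inl (Inl d)"
            using m0 j0 r0 s0 by meson
          then show ?thesis using KK_hs4 by simp
        qed
      qed
    qed
  qed
  show ?thesis unfolding jac_Lp_def
  proof (intro allI ext)
    fix x y z m
    show "(Lp G P x (Lp G P y z) + Lp G P y (Lp G P z x) + Lp G P z (Lp G P x y)) m = 0 m"
      unfolding plus_fun_apply jacobi_coord[of G P x y z m] K by simp
  qed
qed

end

context mrs
begin

lemma main_loc:
  "(lie_hom_to_der Lh Lg (theta_psi Bm \<psi>) \<and> (\<forall>s. preserves_form Bm (theta_psi Bm \<psi> s))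
       \<longrightarrow> derived_potential (gram_d Bm) (double_extension Bm Lg Lh (theta_psi Bm \<psi>)) (\<mu> + \<nu> + \<psi>)
           \<and> poisson (gram_d Bm) (\<mu> + \<nu> + \<psi>) (\<mu> + \<nu> + \<psi>) = 0)
     \<and>
     (poisson (gram_d Bm) (\<mu> + \<nu> + \<psi>) (\<mu> + \<nu> + \<psi>) = 0
       \<longrightarrow> lie_hom_to_der Lh Lg (theta_psi Bm \<psi>) \<and> (\<forall>s. preserves_form Bm (theta_psi Bm \<psi> s))
           \<and> derived_potential (gram_d Bm) (double_extension Bm Lg Lh (theta_psi Bm \<psi>)) (\<mu> + \<nu> + \<psi>))"
proof (intro conjI impI)
  assume "lie_hom_to_der Lh Lg (theta_psi Bm \<psi>) \<and> (\<forall>s. preserves_form Bm (theta_psi Bm \<psi> s))"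
  then have hom: "lie_hom_to_der Lh Lg th" by blast
  show "derived_potential G DE P" by (rule derpot)
  show "poisson G P P = 0"
    by (rule jac_imp_Q0[where G=G, OF hP Gsym jac_from_hom[OF hom] G_surj])
next
  assume Q0: "poisson G P P = 0"
  have J: "jac_Lp G P" by (rule Q0_imp_jac[where G=G, OF hP Gsym Q0])
  show "lie_hom_to_der Lh Lg th" by (rule hom_from_jac[OF J])
  show "\<forall>s. preserves_form Bm (th s)" using preserves by blast
  show "derived_potential G DE P" by (rule derpot)
qed

end

theorem mainTheorem5:
  fixes Bm :: "'b::finite \<Rightarrow> 'b \<Rightarrow> 'k::field_char_0"
    and Lg :: "('b \<Rightarrow> 'k) \<Rightarrow> ('b \<Rightarrow> 'k) \<Rightarrow> ('b \<Rightarrow> 'k)"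
    and Lh :: "('a::finite \<Rightarrow> 'k) \<Rightarrow> ('a \<Rightarrow> 'k) \<Rightarrow> ('a \<Rightarrow> 'k)"
    and \<mu> \<nu> \<psi> :: "(('a + 'a) + 'b, 'k) ext"
  assumes g_lie: "lie_bracket Lg"
    and B_sym: "symmetric_form Bm"
    and B_nondeg: "nondegenerate_form Bm"
    and B_inv: "invariant_form Bm Lg"
    and mu_S3g: "in_S3_g \<mu>"
    and mu_pot: "\<forall>a b. gvec (Lg a b) = poisson (gram_d Bm) (gvec a) (poisson (gram_d Bm) (gvec b) \<mu>)"
    and h_lie: "lie_bracket Lh"
    and nu_space: "in_L2hs_h \<nu>"
    and nu_bracket: "\<forall>x y. hvec (Lh x y) = poisson (gram_d Bm) (hvec x) (poisson (gram_d Bm) (hvec y) \<nu>)"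
    and psi_space: "in_hs_L2g \<psi>"
  shows
    "(lie_hom_to_der Lh Lg (theta_psi Bm \<psi>) \<and> (\<forall>s. preserves_form Bm (theta_psi Bm \<psi> s))
       \<longrightarrow> derived_potential (gram_d Bm) (double_extension Bm Lg Lh (theta_psi Bm \<psi>)) (\<mu> + \<nu> + \<psi>)
           \<and> poisson (gram_d Bm) (\<mu> + \<nu> + \<psi>) (\<mu> + \<nu> + \<psi>) = 0)
     \<and>
     (poisson (gram_d Bm) (\<mu> + \<nu> + \<psi>) (\<mu> + \<nu> + \<psi>) = 0
       \<longrightarrow> lie_hom_to_der Lh Lg (theta_psi Bm \<psi>) \<and> (\<forall>s. preserves_form Bm (theta_psi Bm \<psi> s))
           \<and> derived_potential (gram_d Bm) (double_extension Bm Lg Lh (theta_psi Bm \<psi>)) (\<mu> + \<nu> + \<psi>))"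
proof -
  interpret mrs Bm Lg Lh \<mu> \<nu> \<psi>
    by (unfold_locales; fact assms)
  show ?thesis by (rule main_loc)
qed

end
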